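(* Let $u_\varepsilon\colon\Omega_\varepsilon\to\mathcal{S}_\varepsilon$ and let $G_{u_\varepsilon}\in\mathcal{D}_2(\Omega\times\mathbb{R}^2)$ be the current associated to (the piecewise constant interpolation of) $u_\varepsilon$. For every open set $A \subset\subset \Omega$ and $\varepsilon$ small enough, $$\frac{1}{2} \sum_{\langle i, j \rangle} \varepsilon\, d_{\mathbb{S}^1}\big(u_\varepsilon(\varepsilon i), u_\varepsilon(\varepsilon j) \big) \geq \int_{A \times \mathbb{R}^2}\Phi(\vec G_{u_\varepsilon})\,d |G_{u_\varepsilon}| .$$
   Context: $\Omega\subset\mathbb{R}^2$ bounded open with Lipschitz boundary, $\mathbb{R}^2\cong\mathbb{C}$. $N_\varepsilon\in\mathbb{N}$, $\theta_\varepsilon=2\pi/N_\varepsilon$, $\mathcal{S}_\varepsilon=\{\exp(\iota k\theta_\varepsilon):k=0,\dots,N_\varepsilon-1\}$, $\Omega_\varepsilon=\Omega\cap\varepsilon\mathbb{Z}^2$; $\sum_{\langle i,j\rangle}$ runs over ordered pairs $(i,j)\in\mathbb{Z}^2\times\mathbb{Z}^2$ with $|i-j|=1$ and $\varepsilon i,\varepsilon j\in\Omega_\varepsilon$. $d_{\mathbb{S}^1}$ is the geodesic distance on $\mathbb{S}^1$. $\mathcal{PC}_\varepsilon(S)$ is the set of maps $u\colon\mathbb{R}^2\to S$ constant on each square $\varepsilon i+[0,\varepsilon)^2$; lattice maps are identified with such interpolations (arbitrarily extended). Currents: $\mathcal{D}_k(O)$ is the dual of smooth compactly supported $k$-forms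 on $O$; finite-mass currents are written $T=\vec T|T|$ with $|T|$ the total variation measure and $|\vec T|=1$ $|T|$-a.e. Points of $\mathbb{R}^2\times\mathbb{R}^2$ are $(x,y)$ with bases $e_1,e_2$ and $\bar e_1,\bar e_2$; $\hat x^1=x^2$, $\hat x^2=x^1$. For $u\in\mathcal{PC}_\varepsilon(\mathbb{S}^1)$, $G_u\in\mathcal{D}_2(\Omega\times\mathbb{R}^2)$ is defined by $G_u(\phi\,dx^1\wedge dx^2)=\int_\Omega\phi(x,u(x))dx$, $G_u(\phi\,d\hat x^l\wedge dy^m)=(-1)^{2-l}\int_{J_u}\{\int_{\gamma_x}\phi(x,y)dy^m\}\nu_u^l(x)\,d\mathcal{H}^1(x)$, $G_u(\phi\,dy^1\wedge dy^2)=0$, for $\phi\in C^\infty_c(\Omega\times\mathbb{R}^2)$, where $J_u$ is the jump set, $\nu_u$ its normal and $\gamma_x$ the oriented geodesic arc in $\mathbb{S}^1$ from $u^-(x)$ to $u^+(x)$ (for antipodal traces with phases $\varphi^\pm\in[0,2\pi)$: counterclockwise if $\Psi(\varphi^+-\varphi^-)=\pi$, clockwise if $=-\pi$, where $\Psi(t)=t-Q(t)$ and $Q(t)$ is the point of $2\pi\mathbb{Z}$ nearest to $t$, minimal modulus in case of tie). For a 2-vector $\xi=\xi^{\bar00}e_1\wedge e_2+\xi^{21}e_1\wedge\bar e_1+\xi^{22}e_1\wedge\bar e_2+\xi^{11}e_2\wedge\bar e_1+\xi^{12}e_2\wedge\bar e_2+\xi^{0\bar0}\bar e_1\wedge\bar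 e_2$, $\Phi(\xi)=\sqrt{(\xi^{21})^2+(\xi^{22})^2}+\sqrt{(\xi^{11})^2+(\xi^{12})^2}$. *)

theory Defs
  imports "HOL-Analysis.Analysis"
begin

fun Ck :: "nat \<Rightarrow> ('a::euclidean_space \<Rightarrow> real) \<Rightarrow> bool" where
  "Ck 0 f = continuous_on UNIV f"
| "Ck (Suc k) f = (f differentiable_on UNIV \<and>
      (\<forall>b\<in>Basis. Ck k (\<lambda>x. frechet_derivative f (at x) b)))"

definition Cinf :: "('a::euclidean_space \<Rightarrow> real) \<Rightarrow> bool" where
  "Cinf f \<longleftrightarrow> (\<forall>k. Ck k f)"

text \<open>Basis 2-covectors / 2-vectors of R^2 x R^2 (points (x,y), x,y complex):
  E12 ~ dx1/\dx2,  H l m ~ d(hat x^l)/\dy^m (hat x^1 = x^2, hat x^2 = x^1), Y12 ~ dy1/\dy2.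
  For a 2-vector xi, xi H21 is the coefficient of e1/\bar e1, xi H11 that of e2/\bar e1, etc.\<close>
datatype f2 = E12 | H11 | H12 | H21 | H22 | Y12

definition hidx :: "nat \<Rightarrow> nat \<Rightarrow> f2" where
  "hidx l m = (if l = 1 then (if m = 1 then H11 else H12) else (if m = 1 then H21 else H22))"

type_synonym form2 = "f2 \<Rightarrow> complex \<times> complex \<Rightarrow> real"
type_synonym vec2 = "f2 \<Rightarrow> real"

definition pair2 :: "vec2 \<Rightarrow> vec2 \<Rightarrow> real" where
  "pair2 w v = w E12 * v E12 + w H11 * v H11 + w H12 * v H12 + w H21 * v H21
     + w H22 * v H22 + w Y12 * v Y12"

definition norm2 :: "vec2 \<Rightarrow> real" where
  "norm2 v = sqrt (pair2 v v)"

definition Phi :: "vec2 \<Rightarrow> real" where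
  "Phi v = sqrt ((v H21)\<^sup>2 + (v H22)\<^sup>2) + sqrt ((v H11)\<^sup>2 + (v H12)\<^sup>2)"

definition test_form :: "complex set \<Rightarrow> form2 \<Rightarrow> bool" where
  "test_form Om \<omega> \<longleftrightarrow> (\<forall>I. Cinf (\<omega> I) \<and> compact (closure {p. \<omega> I p \<noteq> 0})
      \<and> closure {p. \<omega> I p \<noteq> 0} \<subseteq> Om \<times> UNIV)"

definition lipschitz_boundary :: "complex set \<Rightarrow> bool" where
  "lipschitz_boundary Om \<longleftrightarrow> (\<forall>p\<in>frontier Om. \<exists>c r h g L. cmod c = 1 \<and> 0 < r \<and> 0 < h \<and>
      L-lipschitz_on UNIV g \<and> g 0 = 0 \<and> (\<forall>s. \<bar>s\<bar> < r \<longrightarrow> \<bar>g s\<bar> < h / 2) \<and>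
      (\<forall>x. let z = c * (x - p) in \<bar>Re z\<bar> < r \<and> \<bar>Im z\<bar> < h \<longrightarrow>
            (x \<in> Om \<longleftrightarrow> Im z < g (Re z))))"

definition Lpt :: "real \<Rightarrow> int \<times> int \<Rightarrow> complex" where
  "Lpt \<epsilon> i = Complex (\<epsilon> * of_int (fst i)) (\<epsilon> * of_int (snd i))"

definition Sset :: "nat \<Rightarrow> complex set" where
  "Sset N = {exp (\<i> * (of_nat k * (2 * pi / of_nat N))) | k. k < N}"

definition PC :: "real \<Rightarrow> complex set \<Rightarrow> (complex \<Rightarrow> complex) set" where
  "PC \<epsilon> S = {u. (\<forall>x. u x \<in> S) \<and>
      (\<forall>i s t. 0 \<le> s \<and> s < \<epsilon> \<and> 0 \<le> t \<and> t < \<epsilon> \<longrightarrow> u (Lpt \<epsilon> i + Complex s t) = u (Lpt \<epsilon> i))}"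

definition nn_pairs :: "real \<Rightarrow> complex set \<Rightarrow> ((int \<times> int) \<times> (int \<times> int)) set" where
  "nn_pairs \<epsilon> Om = {(i, j). dist (Lpt 1 i) (Lpt 1 j) = 1 \<and> Lpt \<epsilon> i \<in> Om \<and> Lpt \<epsilon> j \<in> Om}"

definition dS1 :: "complex \<Rightarrow> complex \<Rightarrow> real" where
  "dS1 z w = arccos (Re (cnj z * w))"

definition energy :: "real \<Rightarrow> complex set \<Rightarrow> (complex \<Rightarrow> complex) \<Rightarrow> real" where
  "energy \<epsilon> Om u = 1 / 2 * (\<Sum>(i, j)\<in>nn_pairs \<epsilon> Om. \<epsilon> * dS1 (u (Lpt \<epsilon> i)) (u (Lpt \<epsilon> j)))"

definition phase :: "complex \<Rightarrow> real" where
  "phase z = (SOME \<phi>. 0 \<le> \<phi> \<and> \<phi> < 2 * pi \<and> z = cis \<phi>)"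

definition twopiZ :: "real set" where
  "twopiZ = {2 * pi * of_int k | k. True}"

definition Qn :: "real \<Rightarrow> real" where
  "Qn t = (SOME q. q \<in> twopiZ \<and> (\<forall>p\<in>twopiZ. \<bar>t - q\<bar> \<le> \<bar>t - p\<bar>) \<and>
              (\<forall>p\<in>twopiZ. \<bar>t - p\<bar> = \<bar>t - q\<bar> \<longrightarrow> \<bar>q\<bar> \<le> \<bar>p\<bar>))"

definition Psi :: "real \<Rightarrow> real" where
  "Psi t = t - Qn t"

definition oint :: "real \<Rightarrow> real \<Rightarrow> (real \<Rightarrow> real) \<Rightarrow> real" where
  "oint a b g = (if a \<le> b then integral {a..b} g else - integral {b..a} g)"

text \<open>Line integral of f dy^m over the oriented geodesic arc gamma from z to w,
  parametrised by y = exp(i t), t from phase z to phase z + Psi(phase w - phase z).\<close>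
definition arcint :: "(complex \<Rightarrow> real) \<Rightarrow> complex \<Rightarrow> complex \<Rightarrow> nat \<Rightarrow> real" where
  "arcint f z w m = oint (phase z) (phase z + Psi (phase w - phase z))
      (\<lambda>t. f (cis t) * (if m = 1 then - sin t else cos t))"

definition evec :: "nat \<Rightarrow> int \<times> int" where
  "evec l = (if l = 1 then (1, 0) else (0, 1))"

text \<open>Common edge of the squares of i and i + e_l, parametrised by s in [0,1];
  its normal is e_l (pointing towards the square of i + e_l, the + side).\<close>
definition edgept :: "real \<Rightarrow> int \<times> int \<Rightarrow> nat \<Rightarrow> real \<Rightarrow> complex" where
  "edgept \<epsilon> i l s = (if l = 1 then Lpt \<epsilon> (i + evec 1) + \<i> * complex_of_real (\<epsilon> * s)
                      else Lpt \<epsilon> (i + evec 2) + complex_of_real (\<epsilon> * s))"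

definition edges :: "real \<Rightarrow> complex set \<Rightarrow> ((int \<times> int) \<times> nat) set" where
  "edges \<epsilon> Om = {(i, l). l \<in> {1, 2} \<and> (\<exists>s\<in>{0..1}. edgept \<epsilon> i l s \<in> Om)}"

text \<open>G_u(omega) for u in PC_eps: the jump set of u in Omega is contained in the union of the
  lattice edges (edges with equal traces contribute 0), nu_u = e_l, u^- = u(eps i),
  u^+ = u(eps (i + e_l)), and H^1 on an edge is eps ds.\<close>
definition Gcur :: "real \<Rightarrow> complex set \<Rightarrow> (complex \<Rightarrow> complex) \<Rightarrow> form2 \<Rightarrow> real" where
  "Gcur \<epsilon> Om u \<omega> = integral Om (\<lambda>x. \<omega> E12 (x, u x))
     + (\<Sum>(i, l)\<in>edges \<epsilon> Om. \<epsilon> * integral {0..1} (\<lambda>s.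
          \<Sum>l'\<in>{1, 2}. \<Sum>m\<in>{1, 2}. (-1) ^ (2 - l') *
             arcint (\<lambda>y. \<omega> (hidx l' m) (edgept \<epsilon> i l s, y)) (u (Lpt \<epsilon> i)) (u (Lpt \<epsilon> (i + evec l))) m
             * (if l' = l then 1 else 0)))"

text \<open>(mu, xi) is the polar decomposition G = xi |G| of a finite-mass current on Om x R^2:
  mu a Radon measure on Om x R^2 (locally finite), |xi| = 1 mu-a.e., G(omega) = int <omega, xi> dmu.
  This determines mu = |G| and xi = vec G (mu-a.e.).\<close>
definition is_polar :: "complex set \<Rightarrow> (form2 \<Rightarrow> real) \<Rightarrow> (complex \<times> complex) measure
                        \<Rightarrow> (complex \<times> complex \<Rightarrow> vec2) \<Rightarrow> bool" where
  "is_polar Om G \<mu> \<xi> \<longleftrightarrow> sets \<mu> = sets borel \<and> emeasure \<mu> (- (Om \<times> UNIV)) = 0 \<and>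
     (\<forall>K. compact K \<and> K \<subseteq> Om \<times> UNIV \<longrightarrow> emeasure \<mu> K < \<infinity>) \<and>
     (\<forall>I. (\<lambda>p. \<xi> p I) \<in> borel_measurable \<mu>) \<and>
     (AE p in \<mu>. norm2 (\<xi> p) = 1) \<and>
     (\<forall>\<omega>. test_form Om \<omega> \<longrightarrow> G \<omega> = (\<integral>p. pair2 (\<lambda>I. \<omega> I p) (\<xi> p) \<partial>\<mu>))"

end

theory Submission
  imports Defs "HOL-Computational_Algebra.Polynomial"
begin

lemma Ck_Suc_imp: "Ck (Suc k) f \<Longrightarrow> Ck k f"
proof (induction k arbitrary: f)
  case 0
  then show ?case by (auto intro: differentiable_imp_continuous_on)
next
  case (Suc k)
  then show ?case by auto
qed

lemma fd_eq: "(f has_derivative f') (at x) \<Longrightarrow> frechet_derivative f (at x) b = f' b"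
  using frechet_derivative_at by metis

lemma Ck_const: "Ck k (\<lambda>x. c)"
proof (induction k arbitrary: c)
  case 0 then show ?case by simp
next
  case (Suc k)
  have "frechet_derivative (\<lambda>x. c) (at x) b = 0" for x b
    by (rule fd_eq[where f'="\<lambda>_. 0", simplified]) (rule has_derivative_const)
  then show ?case using Suc by simp
qed

lemma Ck_add: "Ck k f \<Longrightarrow> Ck k g \<Longrightarrow> Ck k (\<lambda>x. f x + g x)"
proof (induction k arbitrary: f g)
  case 0 then show ?case by (auto intro: continuous_on_add)
next
  case (Suc k)
  from Suc.prems have df: "f differentiable_on UNIV" and dg: "g differentiable_on UNIV" by auto
  have "frechet_derivative (\<lambda>x. f x + g x) (at x) b =
        frechet_derivative f (at x) b + frechet_derivative g (at x) b" for x b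
  proof -
    have "(f has_derivative frechet_derivative f (at x)) (at x)"
      using df frechet_derivative_works differentiable_on_def by blast
    moreover have "(g has_derivative frechet_derivative g (at x)) (at x)"
      using dg frechet_derivative_works differentiable_on_def by blast
    ultimately show ?thesis by (intro fd_eq) (rule has_derivative_add)
  qed
  then show ?case using Suc df dg by (auto intro: differentiable_on_add)
qed

lemma Ck_mult: "Ck k f \<Longrightarrow> Ck k g \<Longrightarrow> Ck k (\<lambda>x. f x * g x)"
proof (induction k arbitrary: f g)
  case 0 then show ?case by (auto intro: continuous_on_mult)
next
  case (Suc k)
  from Suc.prems have df: "f differentiable_on UNIV" and dg: "g differentiable_on UNIV" by auto
  have "frechet_derivative (\<lambda>x. f x * g x) (at x) b =
        f x * frechet_derivative g (at x) b + frechet_derivative f (at x) b * g x" for x b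
  proof -
    have "(f has_derivative frechet_derivative f (at x)) (at x)"
      using df frechet_derivative_works differentiable_on_def by blast
    moreover have "(g has_derivative frechet_derivative g (at x)) (at x)"
      using dg frechet_derivative_works differentiable_on_def by blast
    ultimately show ?thesis by (intro fd_eq) (rule has_derivative_mult)
  qed
  moreover have "Ck k f" "Ck k g" using Suc.prems Ck_Suc_imp by blast+
  ultimately show ?case using Suc df dg
    by (auto intro!: differentiable_on_mult Ck_add)
qed

lemma Ck_prod: "finite S \<Longrightarrow> (\<And>j. j \<in> S \<Longrightarrow> Ck k (f j)) \<Longrightarrow> Ck k (\<lambda>x. \<Prod>j\<in>S. f j x)"
  by (induction S rule: finite_induct) (auto intro: Ck_mult Ck_const)

lemma Ck_diff: "Ck k f \<Longrightarrow> Ck k g \<Longrightarrow> Ck k (\<lambda>x. f x - g x)"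
proof -
  assume "Ck k f" "Ck k g"
  then have "Ck k (\<lambda>x. f x + (-1) * g x)" by (intro Ck_add Ck_mult Ck_const)
  then show ?thesis by simp
qed

definition sm1 :: "(nat \<Rightarrow> real \<Rightarrow> real) \<Rightarrow> bool" where
  "sm1 D \<longleftrightarrow> (\<forall>n t. (D n has_real_derivative D (Suc n) t) (at t))"

lemma Ck_comp:
  fixes v :: "'a::euclidean_space"
  assumes "sm1 D"
  shows "Ck k (\<lambda>p. D n (p \<bullet> v + c))"
proof (induction k arbitrary: n)
  case 0
  have "continuous_on UNIV (D n)"
    using assms unfolding sm1_def
    by (meson DERIV_isCont continuous_at_imp_continuous_on)
  then show ?case
    by (auto intro!: continuous_on_compose2[of UNIV "D n"] continuous_intros)
next
  case (Suc k)
  have der: "((\<lambda>p. D n (p \<bullet> v + c)) has_derivative (\<lambda>h. D (Suc n) (x \<bullet> v + c) * (h \<bullet> v))) (at x)" for x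
  proof -
    have a: "((\<lambda>p. p \<bullet> v + c) has_derivative (\<lambda>h. h \<bullet> v)) (at x)"
      by (auto intro!: derivative_eq_intros)
    have b: "(D n has_derivative (*) (D (Suc n) (x \<bullet> v + c))) (at (x \<bullet> v + c))"
      using assms unfolding sm1_def has_field_derivative_def by blast
    show ?thesis
      using has_derivative_compose[OF a b] by simp
  qed
  have "(\<lambda>p. D n (p \<bullet> v + c)) differentiable_on UNIV"
    unfolding differentiable_on_def differentiable_def using der by blast
  moreover have "Ck k (\<lambda>x. frechet_derivative (\<lambda>p. D n (p \<bullet> v + c)) (at x) b)" for b
  proof -
    have "(\<lambda>x. frechet_derivative (\<lambda>p. D n (p \<bullet> v + c)) (at x) b) = (\<lambda>x. D (Suc n) (x \<bullet> v + c) * (b \<bullet> v))"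
      using fd_eq[OF der] by auto
    moreover have "Ck k (\<lambda>x. D (Suc n) (x \<bullet> v + c) * (b \<bullet> v))"
      by (rule Ck_mult[OF Suc.IH Ck_const])
    ultimately show ?thesis by simp
  qed
  ultimately show ?case by simp
qed

fun PP :: "nat \<Rightarrow> real poly" where
  "PP 0 = 1"
| "PP (Suc n) = [:0,0,1:] * (PP n - pderiv (PP n))"

definition Dpsi :: "nat \<Rightarrow> real \<Rightarrow> real" where
  "Dpsi n t = (if t > 0 then poly (PP n) (inverse t) * exp (- inverse t) else 0)"

lemma poly_exp_lim: "((\<lambda>y. poly Q y / exp y) \<longlongrightarrow> (0::real)) at_top"
proof -
  have "((\<lambda>y. \<Sum>i\<le>degree Q. coeff Q i * (y ^ i / exp y)) \<longlongrightarrow> 0) at_top"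
    by (intro tendsto_null_sum tendsto_mult_right_zero tendsto_power_div_exp_0)
  then show ?thesis
    by (simp add: poly_altdef sum_divide_distrib)
qed

lemma Dpsi_deriv: "(Dpsi n has_real_derivative Dpsi (Suc n) t) (at t)"
proof -
  consider "t > 0" | "t < 0" | "t = 0" by linarith
  then show ?thesis
  proof cases
    case 1
    let ?g = "\<lambda>s. poly (PP n) (inverse s) * exp (- inverse s)"
    have d1: "((\<lambda>s. poly (PP n) (inverse s)) has_real_derivative
        poly (pderiv (PP n)) (inverse t) * (- (inverse t ^ Suc (Suc 0)))) (at t)"
      using 1 by (intro DERIV_chain2[OF poly_DERIV DERIV_inverse]) auto
    have d2: "((\<lambda>s. exp (- inverse s)) has_real_derivative
        exp (- inverse t) * (- (- (inverse t ^ Suc (Suc 0))))) (at t)"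
      using 1 by (intro DERIV_chain2[OF DERIV_exp] DERIV_minus DERIV_inverse) auto
    note d3 = DERIV_mult[OF d1 d2]
    have "poly (pderiv (PP n)) (inverse t) * (- (inverse t ^ Suc (Suc 0))) * exp (- inverse t)
        + exp (- inverse t) * (- (- (inverse t ^ Suc (Suc 0)))) * poly (PP n) (inverse t)
        = Dpsi (Suc n) t"
      using 1 by (simp add: Dpsi_def algebra_simps power2_eq_square)
    with d3 have "(?g has_real_derivative Dpsi (Suc n) t) (at t)" by simp
    then show ?thesis
      by (rule has_field_derivative_transform_within_open[where S="{0<..}"]) (use 1 in \<open>auto simp: Dpsi_def\<close>)
  next
    case 2
    have "((\<lambda>_. 0) has_real_derivative 0) (at t)" by simp
    then have "((\<lambda>_. 0) has_real_derivative Dpsi (Suc n) t) (at t)" using 2 by (simp add: Dpsi_def)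
    then show ?thesis
      by (rule has_field_derivative_transform_within_open[where S="{..<0}"]) (use 2 in \<open>auto simp: Dpsi_def\<close>)
  next
    case 3
    have L: "((\<lambda>y. (Dpsi n y - Dpsi n 0) / (y - 0)) \<longlongrightarrow> 0) (at_left 0)"
    proof (rule Lim_transform_eventually[OF tendsto_const])
      show "\<forall>\<^sub>F x in at_left 0. 0 = (Dpsi n x - Dpsi n 0) / (x - 0)"
        unfolding eventually_at_left_field by (auto intro!: exI[of _ "-1"] simp: Dpsi_def)
    qed
    have R: "((\<lambda>y. (Dpsi n y - Dpsi n 0) / (y - 0)) \<longlongrightarrow> 0) (at_right 0)"
    proof -
      have "((\<lambda>y. poly ([:0,1:] * PP n) (inverse y) / exp (inverse y)) \<longlongrightarrow> 0) (at_right 0)"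
        by (rule filterlim_compose[OF poly_exp_lim filterlim_inverse_at_top_right])
      then show ?thesis
      proof (rule Lim_transform_eventually)
        show "\<forall>\<^sub>F x in at_right 0. poly ([:0, 1:] * PP n) (inverse x) / exp (inverse x) = (Dpsi n x - Dpsi n 0) / (x - 0)"
          unfolding eventually_at_right_field
          by (auto intro!: exI[of _ 1] simp: Dpsi_def exp_minus field_simps)
      qed
    qed
    have "((\<lambda>y. (Dpsi n y - Dpsi n 0) / (y - 0)) \<longlongrightarrow> 0) (at 0)"
      by (rule filterlim_split_at[OF L R])
    then show ?thesis using 3 by (simp add: has_field_derivative_iff Dpsi_def)
  qed
qed

lemma sm1_Dpsi: "sm1 Dpsi"
  unfolding sm1_def using Dpsi_deriv by blast


lemma Dpsi0: "Dpsi 0 t = (if t > 0 then exp (- inverse t) else 0)"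
  by (simp add: Dpsi_def)

lemma Dpsi0_bounds: "0 \<le> Dpsi 0 t" "Dpsi 0 t \<le> 1"
  by (auto simp: Dpsi0)

lemma Dpsi0_nz: "Dpsi 0 t \<noteq> 0 \<Longrightarrow> t > 0"
  by (auto simp: Dpsi0 split: if_splits)

lemma Dpsi0_lim:
  assumes "c > 0"
  shows "(\<lambda>n. Dpsi 0 (real n * c)) \<longlonglongrightarrow> 1"
proof -
  have "(\<lambda>n. exp (- (inverse c * inverse (real n)))) \<longlonglongrightarrow> exp (- (inverse c * 0))"
    by (intro tendsto_exp tendsto_minus tendsto_mult tendsto_const lim_inverse_n)
  then have "(\<lambda>n. exp (- (inverse c * inverse (real n)))) \<longlonglongrightarrow> 1" by simp
  then show ?thesis
  proof (rule Lim_transform_eventually)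
    show "\<forall>\<^sub>F x in sequentially. exp (- (inverse c * inverse (real x))) = Dpsi 0 (real x * c)"
      using assms unfolding eventually_sequentially
      by (auto intro!: exI[of _ 1] simp: Dpsi0 mult.commute)
  qed
qed

definition bump :: "nat \<Rightarrow> 'a::euclidean_space \<Rightarrow> 'a \<Rightarrow> 'a \<Rightarrow> real" where
  "bump n a b p = (\<Prod>k\<in>Basis. Dpsi 0 (p \<bullet> (real n *\<^sub>R k) + (- real n * (a \<bullet> k)))
                             * Dpsi 0 (p \<bullet> (- real n *\<^sub>R k) + real n * (b \<bullet> k)))"

lemma bump_alt: "bump n a b p = (\<Prod>k\<in>Basis. Dpsi 0 (real n * (p \<bullet> k - a \<bullet> k))
                             * Dpsi 0 (real n * (b \<bullet> k - p \<bullet> k)))"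
  unfolding bump_def by (simp add: algebra_simps)

lemma bump_Ck: "Ck k (bump n a b)"
  unfolding bump_def[abs_def]
  by (intro Ck_prod Ck_mult Ck_comp sm1_Dpsi) auto

lemma bump_bounds: "0 \<le> bump n a b p" "bump n a b p \<le> 1"
  unfolding bump_alt
  by (auto intro!: prod_nonneg prod_le_1 mult_nonneg_nonneg mult_le_one Dpsi0_bounds)

lemma bump_nz: "bump n a b p \<noteq> 0 \<Longrightarrow> p \<in> box a b"
proof -
  assume "bump n a b p \<noteq> 0"
  then have "\<forall>k\<in>Basis. Dpsi 0 (real n * (p \<bullet> k - a \<bullet> k)) \<noteq> 0 \<and> Dpsi 0 (real n * (b \<bullet> k - p \<bullet> k)) \<noteq> 0"
    unfolding bump_alt by auto
  then have "\<forall>k\<in>Basis. 0 < real n * (p \<bullet> k - a \<bullet> k) \<and> 0 < real n * (b \<bullet> k - p \<bullet> k)"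
    using Dpsi0_nz by blast
  then have "\<forall>k\<in>Basis. a \<bullet> k < p \<bullet> k \<and> p \<bullet> k < b \<bullet> k"
    by (auto simp: zero_less_mult_iff)
  then show ?thesis by (simp add: mem_box)
qed

lemma bump_lim: "p \<in> box a b \<Longrightarrow> (\<lambda>n. bump n a b p) \<longlonglongrightarrow> 1"
proof -
  assume p: "p \<in> box a b"
  have "(\<lambda>n. \<Prod>k\<in>Basis. Dpsi 0 (real n * (p \<bullet> k - a \<bullet> k)) * Dpsi 0 (real n * (b \<bullet> k - p \<bullet> k)))
        \<longlonglongrightarrow> (\<Prod>k\<in>(Basis::'a set). 1 * 1)"
    using p by (intro tendsto_prod tendsto_mult Dpsi0_lim) (auto simp: mem_box)
  then show ?thesis by (simp add: bump_alt)
qed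

lemma open_cbox_seq:
  fixes U :: "'a::euclidean_space set"
  assumes "open U" "U \<noteq> {}"
  obtains a b :: "nat \<Rightarrow> 'a" where "\<And>j. cbox (a j) (b j) \<subseteq> U" "U = (\<Union>j. box (a j) (b j))"
proof -
  define a' where "a' \<equiv> \<lambda>f :: 'a \<Rightarrow> real \<times> real. (\<Sum>(i::'a)\<in>Basis. fst (f i) *\<^sub>R i)"
  define b' where "b' \<equiv> \<lambda>f :: 'a \<Rightarrow> real \<times> real. (\<Sum>(i::'a)\<in>Basis. snd (f i) *\<^sub>R i)"
  define I where "I \<equiv> {f\<in>Basis \<rightarrow>\<^sub>E \<rat> \<times> \<rat>. cbox (a' f) (b' f) \<subseteq> U}"
  have cI: "countable I"
    unfolding I_def by (rule countable_subset[OF _ countable_PiE[of Basis "\<lambda>_. \<rat> \<times> \<rat>"]])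
      (auto simp: countable_rat)
  have cov: "x \<in> (\<Union>f\<in>I. box (a' f) (b' f))" if "x \<in> U" for x
  proof -
    obtain e where e: "e > 0" "ball x e \<subseteq> U"
      using openE[OF \<open>open U\<close> \<open>x \<in> U\<close>] by auto
    obtain a b where ab:
      "x \<in> box a b" "\<forall>i \<in> Basis. a \<bullet> i \<in> \<rat>" "\<forall>i\<in>Basis. b \<bullet> i \<in> \<rat>"
      "box a b \<subseteq> ball x (e/2)"
      using rational_boxes[of "e/2" x] e(1) by auto
    have "cbox a b = closure (box a b)" using closure_box[of a b] ab(1) by (metis empty_iff)
    also have "\<dots> \<subseteq> cball x (e/2)" using closure_mono[OF ab(4)] closure_ball[of "e/2" x] e(1) by simp
    also have "\<dots> \<subseteq> ball x e" using e(1) by (auto simp: subset_eq)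
    finally have "cbox a b \<subseteq> U" using e(2) by auto
    then show ?thesis
      using ab by (intro UN_I[of "\<lambda>i\<in>Basis. (a \<bullet> i, b \<bullet> i)"])
          (auto simp: euclidean_representation I_def a'_def b'_def)
  qed
  have "I \<noteq> {}" using cov assms(2) by blast
  define g where "g = from_nat_into I"
  have gI: "g j \<in> I" for j using \<open>I \<noteq> {}\<close> by (simp add: g_def from_nat_into)
  have rng: "range g = I" using cI \<open>I \<noteq> {}\<close> by (simp add: g_def range_from_nat_into)
  show ?thesis
  proof
    show "cbox (a' (g j)) (b' (g j)) \<subseteq> U" for j using gI[of j] by (simp add: I_def)
    show "U = (\<Union>j. box (a' (g j)) (b' (g j)))"
    proof
      show "U \<subseteq> (\<Union>j. box (a' (g j)) (b' (g j)))" using cov rng by blast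
      show "(\<Union>j. box (a' (g j)) (b' (g j))) \<subseteq> U"
        using gI box_subset_cbox unfolding I_def by blast
    qed
  qed
qed

lemma smooth_approx_open:
  fixes U :: "'a::euclidean_space set"
  assumes "open U"
  obtains \<phi> :: "nat \<Rightarrow> 'a \<Rightarrow> real" where
    "\<And>n. Cinf (\<phi> n)" "\<And>n p. 0 \<le> \<phi> n p" "\<And>n p. \<phi> n p \<le> 1"
    "\<And>n. \<exists>C. compact C \<and> C \<subseteq> U \<and> {p. \<phi> n p \<noteq> 0} \<subseteq> C"
    "\<And>p. (\<lambda>n. \<phi> n p) \<longlonglongrightarrow> indicator U p"
proof (cases "U = {}")
  case True
  show ?thesis
    by (rule that[of "\<lambda>_ _. 0"]) (auto simp: Cinf_def Ck_const True)
next
  case False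
  obtain a b :: "nat \<Rightarrow> 'a" where ab: "\<And>j. cbox (a j) (b j) \<subseteq> U" "U = (\<Union>j. box (a j) (b j))"
    using open_cbox_seq[OF assms False] by blast
  define \<phi> where "\<phi> n p = 1 - (\<Prod>j<n. 1 - bump n (a j) (b j) p)" for n p
  have pb: "0 \<le> (\<Prod>j<n. 1 - bump n (a j) (b j) p)" "(\<Prod>j<n. 1 - bump n (a j) (b j) p) \<le> 1" for n p
    by (auto intro!: prod_nonneg prod_le_1 simp: bump_bounds)
  show ?thesis
  proof
    show "Cinf (\<phi> n)" for n
      unfolding Cinf_def \<phi>_def[abs_def]
      by (auto intro!: Ck_diff Ck_prod Ck_const bump_Ck)
    show "0 \<le> \<phi> n p" "\<phi> n p \<le> 1" for n p using pb[of n p] by (auto simp: \<phi>_def)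
    show "\<exists>C. compact C \<and> C \<subseteq> U \<and> {p. \<phi> n p \<noteq> 0} \<subseteq> C" for n
    proof (intro exI conjI)
      show "compact (\<Union>j<n. cbox (a j) (b j))" by (auto intro!: compact_UN)
      show "(\<Union>j<n. cbox (a j) (b j)) \<subseteq> U" using ab(1) by blast
      show "{p. \<phi> n p \<noteq> 0} \<subseteq> (\<Union>j<n. cbox (a j) (b j))"
      proof
        fix p assume "p \<in> {p. \<phi> n p \<noteq> 0}"
        then have "\<exists>j<n. bump n (a j) (b j) p \<noteq> 0"
        proof (rule contrapos_pp)
          assume "\<not> (\<exists>j<n. bump n (a j) (b j) p \<noteq> 0)"
          then have "(\<Prod>j<n. 1 - bump n (a j) (b j) p) = 1" by (intro prod.neutral) auto
          then show "p \<notin> {p. \<phi> n p \<noteq> 0}" by (simp add: \<phi>_def)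
        qed
        then obtain j where "j < n" "bump n (a j) (b j) p \<noteq> 0" by blast
        then have "j < n" "p \<in> cbox (a j) (b j)" using bump_nz[of n "a j" "b j" p] box_subset_cbox[of "a j" "b j"] by auto
        then show "p \<in> (\<Union>j<n. cbox (a j) (b j))" by blast
      qed
    qed
    show "(\<lambda>n. \<phi> n p) \<longlonglongrightarrow> indicator U p" for p
    proof (cases "p \<in> U")
      case False
      then have "bump n (a j) (b j) p = 0" for n j
        using bump_nz ab by blast
      then show ?thesis using False by (simp add: \<phi>_def)
    next
      case True
      then obtain j0 where j0: "p \<in> box (a j0) (b j0)" using ab(2) by blast
      have le: "(\<Prod>j<n. 1 - bump n (a j) (b j) p) \<le> 1 - bump n (a j0) (b j0) p" if "n > j0" for n
      proof -
        have "(\<Prod>j<n. 1 - bump n (a j) (b j) p) =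
              (1 - bump n (a j0) (b j0) p) * (\<Prod>j\<in>{..<n} - {j0}. 1 - bump n (a j) (b j) p)"
          using that by (subst prod.remove[of _ j0]) auto
        also have "\<dots> \<le> (1 - bump n (a j0) (b j0) p) * 1"
          by (intro mult_left_mono prod_le_1) (auto simp: bump_bounds)
        finally show ?thesis by simp
      qed
      have "(\<lambda>n. 1 - bump n (a j0) (b j0) p) \<longlonglongrightarrow> 1 - 1"
        by (intro tendsto_diff tendsto_const bump_lim j0)
      then have z: "(\<lambda>n. 1 - bump n (a j0) (b j0) p) \<longlonglongrightarrow> 0" by simp
      have "(\<lambda>n. (\<Prod>j<n. 1 - bump n (a j) (b j) p)) \<longlonglongrightarrow> 0"
      proof (rule tendsto_sandwich[OF _ _ tendsto_const z])
        show "\<forall>\<^sub>F n in sequentially. 0 \<le> (\<Prod>j<n. 1 - bump n (a j) (b j) p)" using pb by simp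
        show "\<forall>\<^sub>F n in sequentially. (\<Prod>j<n. 1 - bump n (a j) (b j) p) \<le> 1 - bump n (a j0) (b j0) p"
          unfolding eventually_sequentially using le by (auto intro!: exI[of _ "Suc j0"])
      qed
      then have "(\<lambda>n. 1 - (\<Prod>j<n. 1 - bump n (a j) (b j) p)) \<longlonglongrightarrow> 1 - 0"
        by (intro tendsto_diff tendsto_const)
      then show ?thesis using True by (simp add: \<phi>_def)
    qed
  qed
qed


lemma phase_ex:
  assumes "norm z = 1"
  shows "\<exists>\<phi>. 0 \<le> \<phi> \<and> \<phi> < 2 * pi \<and> z = cis \<phi>"
proof -
  have z0: "z \<noteq> 0" using assms by auto
  have zc: "z = cis (Arg z)" using cis_Arg[OF z0] assms by (simp add: sgn_div_norm)
  show ?thesis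
  proof (cases "Arg z \<ge> 0")
    case True
    then show ?thesis using Arg_bounded[of z] zc by (intro exI[of _ "Arg z"]) auto
  next
    case False
    have "cis (Arg z + 2 * pi) = cis (Arg z)" by (simp add: cis_mult[symmetric])
    then show ?thesis using Arg_bounded[of z] zc False by (intro exI[of _ "Arg z + 2 * pi"]) auto
  qed
qed

lemma phase_props:
  assumes "norm z = 1"
  shows "0 \<le> phase z" "phase z < 2 * pi" "z = cis (phase z)"
  using someI_ex[OF phase_ex[OF assms]] unfolding phase_def by auto

lemma Qn_ex: "\<exists>q. q \<in> twopiZ \<and> (\<forall>p\<in>twopiZ. \<bar>t - q\<bar> \<le> \<bar>t - p\<bar>) \<and>
              (\<forall>p\<in>twopiZ. \<bar>t - p\<bar> = \<bar>t - q\<bar> \<longrightarrow> \<bar>q\<bar> \<le> \<bar>p\<bar>)"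
proof -
  define k where "k = \<lfloor>t / (2 * pi)\<rfloor>"
  define q1 where "q1 = 2 * pi * of_int k"
  define q2 where "q2 = 2 * pi * of_int (k + 1)"
  have pi: "pi > 0" by simp
  have "of_int k \<le> t / (2 * pi)" "t / (2 * pi) < of_int k + 1"
    unfolding k_def by linarith+
  then have t1: "q1 \<le> t" and t2: "t < q2"
    unfolding q1_def q2_def using pi by (auto simp: field_simps)
  have q12: "q2 = q1 + 2 * pi" by (simp add: q1_def q2_def algebra_simps)
  have q1Z: "q1 \<in> twopiZ" and q2Z: "q2 \<in> twopiZ" unfolding twopiZ_def q1_def q2_def by blast+
  have cases: "p \<le> q1 \<or> p \<ge> q2" if pZ: "p \<in> twopiZ" for p
  proof -
    obtain j where j: "p = 2 * pi * of_int j" using pZ unfolding twopiZ_def by blast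
    have "j \<le> k \<or> j \<ge> k + 1" by linarith
    then show ?thesis
    proof
      assume "j \<le> k" then have "of_int j \<le> (of_int k :: real)" by simp
      then show ?thesis using pi unfolding j q1_def by (intro disjI1) (simp add: mult_left_mono)
    next
      assume "j \<ge> k + 1" then have "of_int j \<ge> (of_int (k + 1) :: real)" by linarith
      then show ?thesis using pi unfolding j q2_def by (intro disjI2) (simp add: mult_left_mono)
    qed
  qed
  consider "t - q1 < q2 - t" | "t - q1 > q2 - t" | "t - q1 = q2 - t" by linarith
  then show ?thesis
  proof cases
    case 1
    show ?thesis
    proof (intro exI[of _ q1] conjI ballI impI)
      show "q1 \<in> twopiZ" by (rule q1Z)
      fix p assume p: "p \<in> twopiZ"
      show "\<bar>t - q1\<bar> \<le> \<bar>t - p\<bar>" using cases[OF p] t1 t2 1 by auto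
      assume "\<bar>t - p\<bar> = \<bar>t - q1\<bar>"
      then have "p = q1" using cases[OF p] t1 t2 1 by auto
      then show "\<bar>q1\<bar> \<le> \<bar>p\<bar>" by simp
    qed
  next
    case 2
    show ?thesis
    proof (intro exI[of _ q2] conjI ballI impI)
      show "q2 \<in> twopiZ" by (rule q2Z)
      fix p assume p: "p \<in> twopiZ"
      show "\<bar>t - q2\<bar> \<le> \<bar>t - p\<bar>" using cases[OF p] t1 t2 2 by auto
      assume "\<bar>t - p\<bar> = \<bar>t - q2\<bar>"
      then have "p = q2" using cases[OF p] t1 t2 2 by auto
      then show "\<bar>q2\<bar> \<le> \<bar>p\<bar>" by simp
    qed
  next
    case 3
    define q where "q = (if \<bar>q1\<bar> \<le> \<bar>q2\<bar> then q1 else q2)"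
    have qq: "q = q1 \<or> q = q2" unfolding q_def by auto
    show ?thesis
    proof (intro exI[of _ q] conjI ballI impI)
      show "q \<in> twopiZ" using qq q1Z q2Z by auto
      fix p assume p: "p \<in> twopiZ"
      show "\<bar>t - q\<bar> \<le> \<bar>t - p\<bar>" using cases[OF p] t1 t2 3 qq by auto
      assume "\<bar>t - p\<bar> = \<bar>t - q\<bar>"
      then have "p = q1 \<or> p = q2" using cases[OF p] t1 t2 3 qq by auto
      then show "\<bar>q\<bar> \<le> \<bar>p\<bar>" unfolding q_def by auto
    qed
  qed
qed

lemma Qn_props: "Qn t \<in> twopiZ" "\<bar>t - Qn t\<bar> \<le> pi"
proof -
  note s = someI_ex[OF Qn_ex[of t], folded Qn_def]
  show "Qn t \<in> twopiZ" using s by blast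
  define k where "k = \<lfloor>t / (2 * pi)\<rfloor>"
  define q1 where "q1 = 2 * pi * of_int k"
  have pi: "pi > 0" by simp
  have "of_int k \<le> t / (2 * pi)" "t / (2 * pi) < of_int k + 1"
    unfolding k_def by linarith+
  then have t1: "q1 \<le> t" and t2: "t < q1 + 2 * pi"
    unfolding q1_def using pi by (auto simp: field_simps)
  have q1Z: "q1 \<in> twopiZ" unfolding twopiZ_def q1_def by blast
  have q2Z: "q1 + 2 * pi \<in> twopiZ" unfolding twopiZ_def q1_def
    by (rule CollectI, rule exI[of _ "k + 1"]) (simp add: algebra_simps)
  have "\<bar>t - Qn t\<bar> \<le> \<bar>t - q1\<bar>" "\<bar>t - Qn t\<bar> \<le> \<bar>t - (q1 + 2 * pi)\<bar>"
    using s q1Z q2Z by blast+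
  then show "\<bar>t - Qn t\<bar> \<le> pi" using t1 t2 by linarith
qed

lemma Psi_props: "\<bar>Psi t\<bar> \<le> pi" "cos (Psi t) = cos t"
proof -
  show "\<bar>Psi t\<bar> \<le> pi" using Qn_props(2)[of t] by (simp add: Psi_def)
  obtain k :: int where k: "Qn t = 2 * pi * of_int k" using Qn_props(1)[of t] unfolding twopiZ_def by blast
  have "cos (t - 2 * pi * of_int k) = cos t"
    by (simp add: cos_diff)
  then show "cos (Psi t) = cos t" by (simp add: Psi_def k)
qed

lemma arccos_cos_abs: "\<bar>x\<bar> \<le> pi \<Longrightarrow> arccos (cos x) = \<bar>x\<bar>"
  by (cases "x \<ge> 0") (auto simp: arccos_cos, metis abs_ge_zero abs_of_neg arccos_cos cos_minus not_le)

lemma dS1_Psi: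
  assumes "norm z = 1" "norm w = 1"
  shows "dS1 z w = \<bar>Psi (phase w - phase z)\<bar>"
proof -
  have "cnj z * w = cis (phase w - phase z)"
    using phase_props(3)[OF assms(1)] phase_props(3)[OF assms(2)]
    by (metis cis_cnj cis_mult diff_conv_add_uminus mult.commute)
  then have "Re (cnj z * w) = cos (Psi (phase w - phase z))"
    by (simp add: Psi_props(2))
  then show ?thesis
    unfolding dS1_def using Psi_props(1) arccos_cos_abs by simp
qed

lemma dS1_sym: "dS1 z w = dS1 w z"
  unfolding dS1_def by (simp add: mult.commute)

lemma Sset_norm: "z \<in> Sset N \<Longrightarrow> norm z = 1"
  unfolding Sset_def by (auto simp del: of_real_mult)


definition Lf :: "'m measure \<Rightarrow> ('m \<Rightarrow> 'b) \<Rightarrow> ('m \<Rightarrow> real) \<Rightarrow> ('b \<Rightarrow> real) \<Rightarrow> real" where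
  "Lf M F h f = (\<integral>x. f (F x) * h x \<partial>M)"

lemma Lf_integrable:
  fixes h :: "'m \<Rightarrow> real" and f :: "'b::topological_space \<Rightarrow> real"
  assumes "integrable M h" "F \<in> M \<rightarrow>\<^sub>M borel" "f \<in> borel_measurable borel" "\<And>y. \<bar>f y\<bar> \<le> 1"
  shows "integrable M (\<lambda>x. f (F x) * h x)"
proof (rule Bochner_Integration.integrable_bound)
  show "integrable M h" by (rule assms(1))
  show "(\<lambda>x. f (F x) * h x) \<in> borel_measurable M"
    using borel_measurable_times[OF measurable_compose[OF assms(2,3)] borel_measurable_integrable[OF assms(1)]]
    by (simp add: o_def)
  show "AE x in M. norm (f (F x) * h x) \<le> norm (h x)"
    using assms(4) by (auto simp: abs_mult intro!: mult_left_le_one_le)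
qed

lemma Lf_dc:
  assumes "integrable M h" "F \<in> M \<rightarrow>\<^sub>M borel"
    "\<And>n. f n \<in> borel_measurable borel" "g \<in> borel_measurable borel"
    "\<And>n y. \<bar>f n y\<bar> \<le> 1" "\<And>y. (\<lambda>n. f n y) \<longlonglongrightarrow> g y"
  shows "(\<lambda>n. Lf M F h (f n)) \<longlonglongrightarrow> Lf M F h g"
  unfolding Lf_def
proof (rule integral_dominated_convergence[where w="\<lambda>x. \<bar>h x\<bar>"])
  show "(\<lambda>x. g (F x) * h x) \<in> borel_measurable M"
    using borel_measurable_times[OF measurable_compose[OF assms(2,4)] borel_measurable_integrable[OF assms(1)]]
    by (simp add: o_def)
  show "(\<lambda>x. f n (F x) * h x) \<in> borel_measurable M" for n
    using borel_measurable_times[OF measurable_compose[OF assms(2) assms(3)[of n]] borel_measurable_integrable[OF assms(1)]]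
    by (simp add: o_def)
  show "integrable M (\<lambda>x. \<bar>h x\<bar>)" using assms(1) by auto
  show "AE x in M. (\<lambda>n. f n (F x) * h x) \<longlonglongrightarrow> g (F x) * h x"
    using assms(6) by (auto intro!: tendsto_mult tendsto_const)
  show "AE x in M. norm (f n (F x) * h x) \<le> \<bar>h x\<bar>" for n
    using assms(5) by (auto simp: abs_mult intro!: mult_left_le_one_le)
qed

lemma Lf_diff:
  assumes "integrable M h" "F \<in> M \<rightarrow>\<^sub>M borel"
    "f \<in> borel_measurable borel" "\<And>y. \<bar>f y\<bar> \<le> 1"
    "g \<in> borel_measurable borel" "\<And>y. \<bar>g y\<bar> \<le> 1"
  shows "Lf M F h (\<lambda>y. f y - g y) = Lf M F h f - Lf M F h g"
  unfolding Lf_def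
  using Lf_integrable[OF assms(1,2,3,4)] Lf_integrable[OF assms(1,2,5,6)]
  by (simp add: left_diff_distrib)

lemma indicator_bound: "\<bar>indicator A y :: real\<bar> \<le> 1"
  by (simp add: indicator_def)

lemma Lf_ca:
  assumes "integrable M h" "F \<in> M \<rightarrow>\<^sub>M borel"
    "disjoint_family A" "\<And>n. A n \<in> sets borel"
  shows "(\<lambda>n. Lf M F h (indicator (A n))) sums Lf M F h (indicator (\<Union>n. A n))"
proof -
  have eq: "(\<Sum>n<N. Lf M F h (indicator (A n))) = Lf M F h (indicator (\<Union>n<N. A n))" for N
  proof -
    have "(\<Sum>n<N. Lf M F h (indicator (A n))) = (\<integral>x. (\<Sum>n<N. indicator (A n) (F x) * h x) \<partial>M)"
      unfolding Lf_def
      by (rule Bochner_Integration.integral_sum[symmetric]) (intro Lf_integrable[OF assms(1,2)] indicator_bound borel_measurable_indicator assms(4))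
    also have "\<dots> = Lf M F h (indicator (\<Union>n<N. A n))"
      unfolding Lf_def
    proof (rule Bochner_Integration.integral_cong[OF refl])
      fix x
      have "indicator (\<Union>n<N. A n) (F x) = (\<Sum>n<N. indicator (A n) (F x) :: real)"
        using indicator_UN_disjoint[of "{..<N}" A "F x"] assms(3)
        by (simp add: disjoint_family_on_def)
      then show "(\<Sum>n<N. indicator (A n) (F x) * h x) = indicator (\<Union>n<N. A n) (F x) * h x"
        by (simp add: sum_distrib_right)
    qed
    finally show ?thesis .
  qed
  have "(\<lambda>N. Lf M F h (indicator (\<Union>n<N. A n))) \<longlonglongrightarrow> Lf M F h (indicator (\<Union>n. A n))"
  proof (rule Lf_dc[OF assms(1,2)])
    show "indicator (\<Union>n<N. A n) \<in> borel_measurable borel" for N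
      using assms(4) by (intro borel_measurable_indicator) auto
    show "indicator (\<Union>n. A n) \<in> borel_measurable borel"
      using assms(4) by (intro borel_measurable_indicator) auto
    show "\<bar>indicator (\<Union>n<N. A n) y :: real\<bar> \<le> 1" for N y by (rule indicator_bound)
    show "(\<lambda>N. indicator (\<Union>n<N. A n) y :: real) \<longlonglongrightarrow> indicator (\<Union>n. A n) y" for y
      by (rule LIMSEQ_indicator_UN)
  qed
  then show ?thesis unfolding sums_def eq .
qed

definition Jsum :: "'e set \<Rightarrow> ('e \<Rightarrow> real) \<Rightarrow> ('e \<Rightarrow> 'c measure) \<Rightarrow> ('e \<Rightarrow> 'c \<Rightarrow> 'b) \<Rightarrow> ('e \<Rightarrow> 'c \<Rightarrow> real)
   \<Rightarrow> ('b \<Rightarrow> real) \<Rightarrow> real" where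
  "Jsum E c Ms Fs hs f = (\<Sum>e\<in>E. c e * Lf (Ms e) (Fs e) (hs e) f)"

lemma dynkin_ext:
  fixes M :: "'b::topological_space measure"
  assumes sM: "sets M = sets borel" and h0: "integrable M h0"
    and hs: "\<And>e. e \<in> E \<Longrightarrow> integrable (Ms e) (hs e)"
    and Fs: "\<And>e. e \<in> E \<Longrightarrow> Fs e \<in> Ms e \<rightarrow>\<^sub>M borel"
    and V: "open V"
    and opn: "\<And>U. open U \<Longrightarrow> U \<subseteq> V \<Longrightarrow> Lf M id h0 (indicator U) = Jsum E c Ms Fs hs (indicator U)"
    and B: "B \<in> sets borel" "B \<subseteq> V"
  shows "Lf M id h0 (indicator B) = Jsum E c Ms Fs hs (indicator B)"
proof -
  have idm: "id \<in> M \<rightarrow>\<^sub>M borel"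
    using measurable_ident_sets[OF sM] by (simp add: id_def)
  define D where "D = {B. B \<in> sets borel \<and> B \<subseteq> V \<and>
      Lf M id h0 (indicator B) = Jsum E c Ms Fs hs (indicator B)}"
  define G where "G = {U. open U \<and> U \<subseteq> V}"
  have Jdiff: "Jsum E c Ms Fs hs (\<lambda>y. indicator X y - indicator Y y) =
      Jsum E c Ms Fs hs (indicator X) - Jsum E c Ms Fs hs (indicator Y)"
    if "X \<in> sets borel" "Y \<in> sets borel" for X Y
  proof -
    have "c e * Lf (Ms e) (Fs e) (hs e) (\<lambda>y. indicator X y - indicator Y y) =
          c e * Lf (Ms e) (Fs e) (hs e) (indicator X) - c e * Lf (Ms e) (Fs e) (hs e) (indicator Y)"
      if "e \<in> E" for e
      using Lf_diff[OF hs[OF that] Fs[OF that], of "indicator X" "indicator Y"] \<open>X \<in> sets borel\<close> \<open>Y \<in> sets borel\<close>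
      by (simp add: indicator_bound right_diff_distrib)
    then show ?thesis unfolding Jsum_def by (simp add: sum_subtractf[symmetric] cong: sum.cong)
  qed
  have "Dynkin_system V D"
  proof (rule Dynkin_systemI)
    show "A \<subseteq> V" if "A \<in> D" for A using that by (simp add: D_def)
    show "V \<in> D" using opn[OF V] V by (simp add: D_def)
    show "V - A \<in> D" if A: "A \<in> D" for A
    proof -
      have AV: "A \<subseteq> V" "A \<in> sets borel" and eqA: "Lf M id h0 (indicator A) = Jsum E c Ms Fs hs (indicator A)"
        using A by (auto simp: D_def)
      have ind: "indicator (V - A) = (\<lambda>y. indicator V y - indicator A y :: real)"
        using AV by (auto simp: indicator_def fun_eq_iff)
      have "Lf M id h0 (indicator (V - A)) = Lf M id h0 (indicator V) - Lf M id h0 (indicator A)"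
        unfolding ind using V AV by (intro Lf_diff[OF h0 idm]) (auto simp: indicator_bound)
      also have "\<dots> = Jsum E c Ms Fs hs (indicator V) - Jsum E c Ms Fs hs (indicator A)"
        using opn[OF V] eqA by simp
      also have "\<dots> = Jsum E c Ms Fs hs (indicator (V - A))"
        unfolding ind using V AV by (intro Jdiff[symmetric]) auto
      finally show ?thesis using V AV by (auto simp: D_def)
    qed
    show "(\<Union>i. A i) \<in> D" if A: "disjoint_family A" "range A \<subseteq> D" for A :: "nat \<Rightarrow> _"
    proof -
      have AB: "A n \<in> sets borel" "A n \<subseteq> V" and eqA: "Lf M id h0 (indicator (A n)) = Jsum E c Ms Fs hs (indicator (A n))" for n
        using A(2) by (auto simp: D_def)
      have s1: "(\<lambda>n. Lf M id h0 (indicator (A n))) sums Lf M id h0 (indicator (\<Union>n. A n))"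
        by (rule Lf_ca[OF h0 idm A(1) AB(1)])
      have s2: "(\<lambda>n. Jsum E c Ms Fs hs (indicator (A n))) sums Jsum E c Ms Fs hs (indicator (\<Union>n. A n))"
        unfolding Jsum_def
        by (intro sums_sum sums_mult Lf_ca[OF hs Fs A(1) AB(1)])
      from s2 have s3: "(\<lambda>n. Lf M id h0 (indicator (A n))) sums Jsum E c Ms Fs hs (indicator (\<Union>n. A n))"
        by (simp only: eqA)
      have "Lf M id h0 (indicator (\<Union>n. A n)) = Jsum E c Ms Fs hs (indicator (\<Union>n. A n))"
        by (rule sums_unique2[OF s1 s3])
      then show ?thesis using AB by (auto simp: D_def)
    qed
  qed
  have GD: "G \<subseteq> D" using opn by (auto simp: G_def D_def)
  have "Int_stable G" unfolding Int_stable_def G_def by auto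
  moreover have "G \<subseteq> Pow V" unfolding G_def by auto
  ultimately have "sigma_sets V G = Dynkin V G" by (intro sigma_eq_Dynkin)
  moreover have "Dynkin V G \<subseteq> D" by (rule Dynkin_system.Dynkin_subset[OF \<open>Dynkin_system V D\<close> GD])
  ultimately have sD: "sigma_sets V G \<subseteq> D" by simp
  have "X \<inter> V \<in> sigma_sets V G" if "X \<in> sigma_sets UNIV {S. open S}" for X
    using that
  proof induction
    case (Basic a)
    then have "a \<inter> V \<in> G" using V by (auto simp: G_def)
    then show ?case by auto
  next
    case Empty
    then show ?case by (simp add: sigma_sets.Empty)
  next
    case (Compl a)
    have "(UNIV - a) \<inter> V = V - (a \<inter> V)" by auto
    then show ?case using sigma_sets.Compl[OF Compl.IH] by simp
  next
    case (Union a)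
    have "(\<Union>i. a i) \<inter> V = (\<Union>i. a i \<inter> V)" by auto
    then show ?case using sigma_sets.Union[of "\<lambda>i. a i \<inter> V", OF Union.IH] by simp
  qed
  then have "B \<inter> V \<in> sigma_sets V G" using B(1) by (simp add: sets_borel)
  then have "B \<in> D" using sD B(2) by (simp add: Int_absorb2 subset_eq)
  then show ?thesis by (simp add: D_def)
qed


definition "zA \<epsilon> u e = u (Lpt \<epsilon> (fst e))"
definition "zB \<epsilon> u e = u (Lpt \<epsilon> (fst e + evec (snd e)))"
definition "al \<epsilon> u e = phase (zA \<epsilon> u e)"
definition "ps \<epsilon> u e = Psi (phase (zB \<epsilon> u e) - phase (zA \<epsilon> u e))"
definition "lo \<epsilon> u e = min (al \<epsilon> u e) (al \<epsilon> u e + ps \<epsilon> u e)"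
definition "hi \<epsilon> u e = max (al \<epsilon> u e) (al \<epsilon> u e + ps \<epsilon> u e)"
definition "sg \<epsilon> u e = (if al \<epsilon> u e \<le> al \<epsilon> u e + ps \<epsilon> u e then 1 else (-1::real))"
definition ebox :: "real \<Rightarrow> (complex \<Rightarrow> complex) \<Rightarrow> (int \<times> int) \<times> nat \<Rightarrow> (real \<times> real) set" where
  "ebox \<epsilon> u e = cbox (0, lo \<epsilon> u e) (1, hi \<epsilon> u e)"
definition FF :: "real \<Rightarrow> (int \<times> int) \<times> nat \<Rightarrow> real \<times> real \<Rightarrow> complex \<times> complex" where
  "FF \<epsilon> e x = (edgept \<epsilon> (fst e) (snd e) (fst x), cis (snd x))"
definition cm :: "nat \<Rightarrow> real \<Rightarrow> real" where
  "cm m t = (if m = 1 then - sin t else cos t)"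
definition "hh \<epsilon> u m e x = indicator (ebox \<epsilon> u e) x * cm m (snd x)"
definition "coef \<epsilon> u l e = (if snd e = l then \<epsilon> * (-1) ^ (2 - l) * sg \<epsilon> u e else 0)"
definition "JI \<epsilon> \<Omega> u l m f = Jsum (edges \<epsilon> \<Omega>) (coef \<epsilon> u l) (\<lambda>_. lborel) (FF \<epsilon>) (hh \<epsilon> u m) f"

lemma cm_cont: "continuous_on S (cm m)"
  unfolding cm_def[abs_def] by (cases "m = 1") (auto intro!: continuous_intros)

lemma edgept_cont: "continuous_on S (edgept \<epsilon> i l)"
  unfolding edgept_def[abs_def] by (cases "l = 1") (auto intro!: continuous_intros)

lemma FF_cont: "continuous_on S (FF \<epsilon> e)"
  unfolding FF_def[abs_def]
  by (auto intro!: continuous_intros continuous_on_compose2[OF edgept_cont])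

lemma FF_meas: "FF \<epsilon> e \<in> lborel \<rightarrow>\<^sub>M borel"
  using borel_measurable_continuous_onI[OF FF_cont] by simp

lemma hh_integrable: "integrable lborel (hh \<epsilon> u m e)"
proof -
  have "integrable lborel (\<lambda>x. indicator (ebox \<epsilon> u e) x *\<^sub>R cm m (snd x))"
    unfolding ebox_def
    by (rule borel_integrable_compact) (auto intro!: continuous_on_compose2[OF cm_cont] continuous_intros)
  then show ?thesis unfolding hh_def[abs_def] by simp
qed

lemma Cinf_cont: "Cinf f \<Longrightarrow> continuous_on S f"
  unfolding Cinf_def using Ck.simps(1) continuous_on_subset by blast

lemma arcint_zero: "arcint (\<lambda>y. 0) z w m = 0"
  unfolding arcint_def oint_def by simp

lemma arcint_eq:
  "arcint (\<lambda>y. \<phi> (edgept \<epsilon> i l s, y)) (u (Lpt \<epsilon> i)) (u (Lpt \<epsilon> (i + evec l))) m =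
   sg \<epsilon> u (i, l) * integral {lo \<epsilon> u (i, l)..hi \<epsilon> u (i, l)} (\<lambda>t. \<phi> (FF \<epsilon> (i, l) (s, t)) * cm m t)"
  unfolding arcint_def oint_def sg_def lo_def hi_def FF_def cm_def al_def ps_def zA_def zB_def
  by auto

lemma integral_cmult_real: "integral S (\<lambda>x. c * f x) = c * integral S (f :: _ \<Rightarrow> real)"
  using integral_cmul[of S c f] by simp

lemma edge_integral:
  assumes "continuous_on UNIV \<phi>"
  shows "integral {0..1} (\<lambda>s. integral {lo \<epsilon> u e..hi \<epsilon> u e} (\<lambda>t. \<phi> (FF \<epsilon> e (s, t)) * cm m t))
       = Lf lborel (FF \<epsilon> e) (hh \<epsilon> u m e) \<phi>"
proof -
  let ?g = "\<lambda>x. \<phi> (FF \<epsilon> e x) * cm m (snd x)"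
  have cg: "continuous_on UNIV ?g"
    by (auto intro!: continuous_intros continuous_on_compose2[OF assms] continuous_on_compose2[OF cm_cont] FF_cont)
  have "integral (cbox (0, lo \<epsilon> u e) (1, hi \<epsilon> u e)) ?g =
        integral (cbox 0 1) (\<lambda>s. integral (cbox (lo \<epsilon> u e) (hi \<epsilon> u e)) (\<lambda>t. ?g (s, t)))"
    by (rule integral_prod_continuous) (rule continuous_on_subset[OF cg], simp)
  then have 1: "integral {0..1} (\<lambda>s. integral {lo \<epsilon> u e..hi \<epsilon> u e} (\<lambda>t. \<phi> (FF \<epsilon> e (s, t)) * cm m t))
      = integral (ebox \<epsilon> u e) ?g"
    by (simp add: ebox_def cbox_interval)
  have si: "set_integrable lborel (ebox \<epsilon> u e) ?g"
    unfolding set_integrable_def ebox_def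
    by (rule borel_integrable_compact) (auto intro!: continuous_on_subset[OF cg])
  have "integral (ebox \<epsilon> u e) ?g = (LINT x : ebox \<epsilon> u e | lborel. ?g x)"
    by (rule set_borel_integral_eq_integral(2)[OF si, symmetric])
  also have "\<dots> = Lf lborel (FF \<epsilon> e) (hh \<epsilon> u m e) \<phi>"
    unfolding set_lebesgue_integral_def Lf_def hh_def
    by (rule Bochner_Integration.integral_cong) auto
  finally show ?thesis using 1 by simp
qed

lemma hidx_eq: "l \<in> {1,2} \<Longrightarrow> m \<in> {1,2} \<Longrightarrow> l' \<in> {1,2} \<Longrightarrow> m' \<in> {1,2} \<Longrightarrow>
   hidx l' m' = hidx l m \<longleftrightarrow> l' = l \<and> m' = m"
  unfolding hidx_def by auto

lemma inner_single:
  assumes "l \<in> {1,2}" "m \<in> {1,2}" "l' \<in> {1,2}"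
  shows "(\<Sum>l''\<in>{1, 2}. \<Sum>m'\<in>{1, 2}. (-1) ^ (2 - l'') *
             arcint (\<lambda>y. (\<lambda>J. if J = hidx l m then \<phi> else (\<lambda>_. 0)) (hidx l'' m') (p, y)) z w m'
             * (if l'' = l' then 1 else 0)) =
         (if l' = l then (-1) ^ (2 - l) * arcint (\<lambda>y. \<phi> (p, y)) z w m else (0::real))"
proof -
  have "l = 1 \<or> l = 2" "m = 1 \<or> m = 2" "l' = 1 \<or> l' = 2" using assms by auto
  then show ?thesis by (elim disjE; simp add: hidx_def arcint_zero)
qed

lemma Gcur_single:
  assumes "l \<in> {1,2}" "m \<in> {1,2}" "Cinf \<phi>"
  shows "Gcur \<epsilon> \<Omega> u (\<lambda>J. if J = hidx l m then \<phi> else (\<lambda>_. 0)) = JI \<epsilon> \<Omega> u l m \<phi>"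
proof -
  have E12: "hidx l m \<noteq> E12" unfolding hidx_def by auto
  have cphi: "continuous_on UNIV \<phi>" by (rule Cinf_cont[OF assms(3)])
  have edge: "\<epsilon> * integral {0..1} (\<lambda>s.
          \<Sum>l'\<in>{1, 2}. \<Sum>m'\<in>{1, 2}. (-1) ^ (2 - l') *
             arcint (\<lambda>y. (\<lambda>J. if J = hidx l m then \<phi> else (\<lambda>_. 0)) (hidx l' m') (edgept \<epsilon> i l2 s, y))
               (u (Lpt \<epsilon> i)) (u (Lpt \<epsilon> (i + evec l2))) m'
             * (if l' = l2 then 1 else 0))
      = coef \<epsilon> u l (i, l2) * Lf lborel (FF \<epsilon> (i, l2)) (hh \<epsilon> u m (i, l2)) \<phi>"
    if "(i, l2) \<in> edges \<epsilon> \<Omega>" for i l2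
  proof -
    have l2: "l2 \<in> {1,2}" using that by (simp add: edges_def)
    let ?e = "(i, l2)"
    have "\<epsilon> * integral {0..1} (\<lambda>s.
          \<Sum>l'\<in>{1, 2}. \<Sum>m'\<in>{1, 2}. (-1) ^ (2 - l') *
             arcint (\<lambda>y. (\<lambda>J. if J = hidx l m then \<phi> else (\<lambda>_. 0)) (hidx l' m') (edgept \<epsilon> i l2 s, y))
               (u (Lpt \<epsilon> i)) (u (Lpt \<epsilon> (i + evec l2))) m'
             * (if l' = l2 then 1 else 0))
        = \<epsilon> * integral {0..1} (\<lambda>s. (if l2 = l then (-1) ^ (2 - l) *
             arcint (\<lambda>y. \<phi> (edgept \<epsilon> i l2 s, y)) (u (Lpt \<epsilon> i)) (u (Lpt \<epsilon> (i + evec l2))) m else 0))"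
      by (simp only: inner_single[OF assms(1,2) l2])
    also have "\<dots> = \<epsilon> * integral {0..1} (\<lambda>s. (if l2 = l then (-1) ^ (2 - l) * sg \<epsilon> u ?e else 0) *
          integral {lo \<epsilon> u ?e..hi \<epsilon> u ?e} (\<lambda>t. \<phi> (FF \<epsilon> ?e (s, t)) * cm m t))"
      by (simp only: arcint_eq mult.assoc mult_zero_left if_distrib[of "\<lambda>x. x * _"])
    also have "\<dots> = \<epsilon> * (if l2 = l then (-1) ^ (2 - l) * sg \<epsilon> u ?e else 0) *
          integral {0..1} (\<lambda>s. integral {lo \<epsilon> u ?e..hi \<epsilon> u ?e} (\<lambda>t. \<phi> (FF \<epsilon> ?e (s, t)) * cm m t))"
      by (simp only: integral_cmult_real mult.assoc)
    also have "\<dots> = coef \<epsilon> u l ?e * Lf lborel (FF \<epsilon> ?e) (hh \<epsilon> u m ?e) \<phi>"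
      unfolding edge_integral[OF cphi] coef_def by auto
    finally show ?thesis .
  qed
  have "Gcur \<epsilon> \<Omega> u (\<lambda>J. if J = hidx l m then \<phi> else (\<lambda>_. 0)) =
        (\<Sum>e\<in>edges \<epsilon> \<Omega>. coef \<epsilon> u l e * Lf lborel (FF \<epsilon> e) (hh \<epsilon> u m e) \<phi>)"
    unfolding Gcur_def
  proof -
    have 0: "(\<lambda>x. (if E12 = hidx l m then \<phi> else (\<lambda>_. 0)) (x, u x)) = (\<lambda>x. 0)"
      using E12 by auto
    show "integral \<Omega> (\<lambda>x. (if E12 = hidx l m then \<phi> else (\<lambda>_. 0)) (x, u x)) + (\<Sum>(i, l2)\<in>edges \<epsilon> \<Omega>. \<epsilon> * integral {0..1} (\<lambda>s.
          \<Sum>l'\<in>{1, 2}. \<Sum>m'\<in>{1, 2}. (-1) ^ (2 - l') *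
             arcint (\<lambda>y. (if hidx l' m' = hidx l m then \<phi> else (\<lambda>_. 0)) (edgept \<epsilon> i l2 s, y))
               (u (Lpt \<epsilon> i)) (u (Lpt \<epsilon> (i + evec l2))) m'
             * (if l' = l2 then 1 else 0))) =
        (\<Sum>e\<in>edges \<epsilon> \<Omega>. coef \<epsilon> u l e * Lf lborel (FF \<epsilon> e) (hh \<epsilon> u m e) \<phi>)"
      unfolding 0 integral_0 add_0_left
    proof (rule sum.cong[OF refl])
      fix e assume e: "e \<in> edges \<epsilon> \<Omega>"
      obtain i l2 where ee: "e = (i, l2)" by (cases e)
      show "(case e of (i, l2) \<Rightarrow> \<epsilon> * integral {0..1} (\<lambda>s.
          \<Sum>l'\<in>{1, 2}. \<Sum>m'\<in>{1, 2}. (-1) ^ (2 - l') *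
             arcint (\<lambda>y. (if hidx l' m' = hidx l m then \<phi> else (\<lambda>_. 0)) (edgept \<epsilon> i l2 s, y))
               (u (Lpt \<epsilon> i)) (u (Lpt \<epsilon> (i + evec l2))) m'
             * (if l' = l2 then 1 else 0))) = coef \<epsilon> u l e * Lf lborel (FF \<epsilon> e) (hh \<epsilon> u m e) \<phi>"
        using edge[of i l2] e unfolding ee by simp
    qed
  qed
  then show ?thesis unfolding JI_def Jsum_def .
qed


lemma norm2_comp:
  assumes "norm2 v = 1"
  shows "\<bar>v I\<bar> \<le> 1"
proof -
  have p: "pair2 v v = 1" using assms unfolding norm2_def by simp
  have "(v I)\<^sup>2 \<le> pair2 v v"
    unfolding pair2_def by (cases I) (auto simp: power2_eq_square)
  then have "(v I)\<^sup>2 \<le> 1" using p by simp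
  then show ?thesis using abs_square_le_1 by blast
qed

lemma pair2_single:
  assumes "l \<in> {1,2}" "m \<in> {1,2}"
  shows "pair2 (\<lambda>J. (if J = hidx l m then f else (\<lambda>_. 0)) p) v = f p * v (hidx l m)"
proof -
  have "l = 1 \<or> l = 2" "m = 1 \<or> m = 2" using assms by auto
  then show ?thesis by (elim disjE; simp add: pair2_def hidx_def)
qed

lemma polar_finite:
  assumes pol: "is_polar \<Omega> G \<mu> \<xi>"
    and V: "open V" "compact (closure V)" "closure V \<subseteq> \<Omega> \<times> UNIV"
  shows "emeasure \<mu> V < \<infinity>" "V \<in> sets \<mu>"
proof -
  have sM: "sets \<mu> = sets borel" using pol by (simp add: is_polar_def)
  have "emeasure \<mu> (closure V) < \<infinity>" using pol V by (simp add: is_polar_def)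
  moreover have "emeasure \<mu> V \<le> emeasure \<mu> (closure V)"
    by (rule emeasure_mono) (auto simp: sM closure_subset)
  ultimately show "emeasure \<mu> V < \<infinity>" by simp
  show "V \<in> sets \<mu>" using V by (simp add: sM)
qed

lemma h0_integrable:
  assumes pol: "is_polar \<Omega> G \<mu> \<xi>"
    and V: "open V" "compact (closure V)" "closure V \<subseteq> \<Omega> \<times> UNIV"
  shows "integrable \<mu> (\<lambda>p. indicator V p * \<xi> p I)"
proof (rule Bochner_Integration.integrable_bound)
  show "integrable \<mu> (indicator V :: _ \<Rightarrow> real)"
    using polar_finite[OF pol V] by simp
  show "(\<lambda>p. indicator V p * \<xi> p I) \<in> borel_measurable \<mu>"
    using pol polar_finite(2)[OF pol V] unfolding is_polar_def
    by (intro borel_measurable_times borel_measurable_indicator) auto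
  have "AE p in \<mu>. norm2 (\<xi> p) = 1" using pol by (simp add: is_polar_def)
  then show "AE p in \<mu>. norm (indicator V p * \<xi> p I) \<le> norm (indicator V p :: real)"
  proof eventually_elim
    case (elim p)
    then show ?case using norm2_comp[OF elim, of I] by (auto simp: indicator_def)
  qed
qed

lemma open_identity:
  assumes pol: "is_polar \<Omega> (Gcur \<epsilon> \<Omega> u) \<mu> \<xi>"
    and lm: "l \<in> {1,2}" "m \<in> {1,2}"
    and V: "open V" "compact (closure V)" "closure V \<subseteq> \<Omega> \<times> UNIV"
    and U: "open U" "U \<subseteq> V"
  shows "Lf \<mu> id (\<lambda>p. indicator V p * \<xi> p (hidx l m)) (indicator U) = JI \<epsilon> \<Omega> u l m (indicator U)"
proof -
  let ?I = "hidx l m"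
  let ?h0 = "\<lambda>p. indicator V p * \<xi> p ?I"
  have sM: "sets \<mu> = sets borel" using pol by (simp add: is_polar_def)
  have idm: "id \<in> \<mu> \<rightarrow>\<^sub>M borel"
    using measurable_ident_sets[OF sM] by (simp add: id_def)
  have h0: "integrable \<mu> ?h0" by (rule h0_integrable[OF pol V])
  obtain \<phi> :: "nat \<Rightarrow> complex \<times> complex \<Rightarrow> real" where
    \<phi>: "\<And>n. Cinf (\<phi> n)" "\<And>n p. 0 \<le> \<phi> n p" "\<And>n p. \<phi> n p \<le> 1"
    "\<And>n. \<exists>C. compact C \<and> C \<subseteq> U \<and> {p. \<phi> n p \<noteq> 0} \<subseteq> C"
    "\<And>p. (\<lambda>n. \<phi> n p) \<longlonglongrightarrow> indicator U p"
    using smooth_approx_open[OF U(1)] by blast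
  define \<omega> where "\<omega> n = (\<lambda>J. if J = ?I then \<phi> n else (\<lambda>_. 0))" for n
  have supp: "\<phi> n p = 0" if "p \<notin> V" for n p
  proof -
    obtain C where "compact C" "C \<subseteq> U" "{p. \<phi> n p \<noteq> 0} \<subseteq> C" using \<phi>(4) by blast
    then show ?thesis using that U(2) by blast
  qed
  have tf: "test_form \<Omega> (\<omega> n)" for n
    unfolding test_form_def
  proof
    fix J
    show "Cinf (\<omega> n J) \<and> compact (closure {p. \<omega> n J p \<noteq> 0}) \<and> closure {p. \<omega> n J p \<noteq> 0} \<subseteq> \<Omega> \<times> UNIV"
    proof (cases "J = ?I")
      case True
      obtain C where C: "compact C" "C \<subseteq> U" "{p. \<phi> n p \<noteq> 0} \<subseteq> C" using \<phi>(4) by blast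
      have cl: "closure {p. \<phi> n p \<noteq> 0} \<subseteq> C"
        by (rule closure_minimal[OF C(3) compact_imp_closed[OF C(1)]])
      have "compact (closure {p. \<phi> n p \<noteq> 0})"
        using C compact_imp_bounded bounded_subset compact_closure by metis
      moreover have "closure {p. \<phi> n p \<noteq> 0} \<subseteq> \<Omega> \<times> UNIV"
        using cl C(2) U(2) closure_subset[of V] V(3) by blast
      ultimately show ?thesis using True \<phi>(1) by (simp add: \<omega>_def)
    next
      case False
      then show ?thesis by (simp add: \<omega>_def Cinf_def Ck_const)
    qed
  qed
  have eq: "Lf \<mu> id ?h0 (\<phi> n) = JI \<epsilon> \<Omega> u l m (\<phi> n)" for n
  proof -
    have "Lf \<mu> id ?h0 (\<phi> n) = (\<integral>p. pair2 (\<lambda>J. \<omega> n J p) (\<xi> p) \<partial>\<mu>)"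
      unfolding Lf_def \<omega>_def pair2_single[OF lm]
      by (rule Bochner_Integration.integral_cong) (auto simp: indicator_def supp)
    also have "\<dots> = Gcur \<epsilon> \<Omega> u (\<omega> n)"
      using pol tf[of n] unfolding is_polar_def by simp
    also have "\<dots> = JI \<epsilon> \<Omega> u l m (\<phi> n)"
      unfolding \<omega>_def by (rule Gcur_single[OF lm \<phi>(1)])
    finally show ?thesis .
  qed
  have meas: "\<phi> n \<in> borel_measurable borel" for n
    by (rule borel_measurable_continuous_onI[OF Cinf_cont[OF \<phi>(1)]])
  have bnd: "\<bar>\<phi> n y\<bar> \<le> 1" for n y using \<phi>(2,3)[of n y] by simp
  have mU: "indicator U \<in> borel_measurable borel" using U(1) by (intro borel_measurable_indicator) auto
  have L1: "(\<lambda>n. Lf \<mu> id ?h0 (\<phi> n)) \<longlonglongrightarrow> Lf \<mu> id ?h0 (indicator U)"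
    by (rule Lf_dc[OF h0 idm meas mU bnd \<phi>(5)])
  have L2: "(\<lambda>n. JI \<epsilon> \<Omega> u l m (\<phi> n)) \<longlonglongrightarrow> JI \<epsilon> \<Omega> u l m (indicator U)"
    unfolding JI_def Jsum_def
    by (intro tendsto_sum tendsto_mult_left Lf_dc[OF hh_integrable FF_meas meas mU bnd \<phi>(5)])
  from L2 have L3: "(\<lambda>n. Lf \<mu> id ?h0 (\<phi> n)) \<longlonglongrightarrow> JI \<epsilon> \<Omega> u l m (indicator U)"
    by (simp only: eq)
  show ?thesis by (rule LIMSEQ_unique[OF L1 L3])
qed

lemma borel_identity:
  assumes pol: "is_polar \<Omega> (Gcur \<epsilon> \<Omega> u) \<mu> \<xi>"
    and lm: "l \<in> {1,2}" "m \<in> {1,2}"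
    and V: "open V" "compact (closure V)" "closure V \<subseteq> \<Omega> \<times> UNIV"
    and B: "B \<in> sets borel" "B \<subseteq> V"
  shows "Lf \<mu> id (\<lambda>p. indicator V p * \<xi> p (hidx l m)) (indicator B) = JI \<epsilon> \<Omega> u l m (indicator B)"
  unfolding JI_def
proof (rule dynkin_ext[OF _ _ _ _ V(1) _ B])
  show "sets \<mu> = sets borel" using pol by (simp add: is_polar_def)
  show "integrable \<mu> (\<lambda>p. indicator V p * \<xi> p (hidx l m))" by (rule h0_integrable[OF pol V])
  show "integrable lborel (hh \<epsilon> u m e)" for e by (rule hh_integrable)
  show "FF \<epsilon> e \<in> lborel \<rightarrow>\<^sub>M borel" for e by (rule FF_meas)
  show "Lf \<mu> id (\<lambda>p. indicator V p * \<xi> p (hidx l m)) (indicator U) =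
        Jsum (edges \<epsilon> \<Omega>) (coef \<epsilon> u l) (\<lambda>_. lborel) (FF \<epsilon>) (hh \<epsilon> u m) (indicator U)"
    if "open U" "U \<subseteq> V" for U
    using open_identity[OF pol lm V that] unfolding JI_def .
qed


lemma dir_exists:
  fixes a b :: real and n :: nat
  assumes n: "n \<ge> 1"
  shows "\<exists>k<n. sqrt (a\<^sup>2 + b\<^sup>2) * cos (pi / n) \<le> a * cos (2 * pi * k / n) + b * sin (2 * pi * k / n)"
proof (cases "a\<^sup>2 + b\<^sup>2 = 0")
  case True
  then have "a = 0" "b = 0" by (auto simp: add_nonneg_eq_0_iff)
  then show ?thesis using n by (intro exI[of _ 0]) auto
next
  case False
  define r where "r = sqrt (a\<^sup>2 + b\<^sup>2)"
  have "a\<^sup>2 + b\<^sup>2 > 0" using False sum_power2_ge_zero[of a b] by linarith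
  then have r: "r > 0" unfolding r_def by simp
  have "(a / r)\<^sup>2 + (b / r)\<^sup>2 = 1"
    using False r unfolding r_def by (simp add: power_divide add_divide_distrib[symmetric])
  then obtain t where t: "0 \<le> t" "t < 2 * pi" "a / r = cos t" "b / r = sin t"
    by (rule sincos_total_2pi)
  have ab: "a = r * cos t" "b = r * sin t" using t(3,4) r by (auto simp: field_simps)
  have nr: "real n > 0" using n by simp
  define x where "x = t * n / (2 * pi)"
  define j where "j = round x"
  have x: "0 \<le> x" "x < n" unfolding x_def using t nr by (auto simp: field_simps)
  have jx: "\<bar>of_int j - x\<bar> \<le> 1/2" unfolding j_def by (rule of_int_round_abs_le)
  have j0: "j \<ge> 0" using jx x by linarith
  have jn: "j \<le> n" using jx x by linarith
  have dist: "\<bar>t - 2 * pi * of_int j / n\<bar> \<le> pi / n"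
  proof -
    have "\<bar>t - 2 * pi * of_int j / n\<bar> = (2 * pi / n) * \<bar>x - of_int j\<bar>"
      unfolding x_def using nr by (simp add: field_simps abs_mult[symmetric])
    also have "\<dots> \<le> (2 * pi / n) * (1/2)"
      using jx by (intro mult_left_mono) (auto simp: abs_minus_commute)
    finally show ?thesis by simp
  qed
  define k where "k = (if j = int n then 0 else nat j)"
  have kn: "k < n" unfolding k_def using j0 jn n by auto
  have ck: "cos (t - 2 * pi * k / n) = cos (t - 2 * pi * of_int j / n)"
  proof (cases "j = int n")
    case True
    have "cos (t - 2 * pi * of_int j / n) = cos (t - 2 * pi)" using True nr by simp
    also have "\<dots> = cos t" by (simp add: cos_diff)
    finally show ?thesis using True by (simp add: k_def)
  next
    case False
    then show ?thesis using j0 by (simp add: k_def)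
  qed
  have "cos (pi / n) \<le> cos \<bar>t - 2 * pi * of_int j / n\<bar>"
  proof (rule cos_monotone_0_pi_le)
    show "\<bar>t - 2 * pi * of_int j / n\<bar> \<le> pi / n" by (rule dist)
    have "pi / n \<le> pi / 1" using n by (intro divide_left_mono) auto
    then show "pi / n \<le> pi" by simp
  qed simp
  also have "\<dots> = cos (t - 2 * pi * k / n)" by (simp add: ck)
  finally have c: "cos (pi / n) \<le> cos (t - 2 * pi * k / n)" .
  have "a * cos (2 * pi * k / n) + b * sin (2 * pi * k / n) = r * cos (t - 2 * pi * k / n)"
    unfolding ab cos_diff by (simp add: algebra_simps)
  moreover have "r * cos (pi / n) \<le> r * cos (t - 2 * pi * k / n)"
    using c r by simp
  ultimately show ?thesis using kn unfolding r_def by auto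
qed

lemma ebox_mem: "x \<in> ebox \<epsilon> u e \<Longrightarrow> fst x \<in> {0..1}"
  unfolding ebox_def by (cases x) (simp add: cbox_Pair_eq cbox_interval)

lemma ebox_measure: "measure lborel (ebox \<epsilon> u e) = \<bar>ps \<epsilon> u e\<bar>"
proof -
  have "measure lborel (ebox \<epsilon> u e) = measure lborel (cbox (0::real) 1) * measure lborel (cbox (lo \<epsilon> u e) (hi \<epsilon> u e))"
    unfolding ebox_def by (rule content_Pair)
  also have "\<dots> = hi \<epsilon> u e - lo \<epsilon> u e"
    by (simp add: cbox_interval lo_def hi_def)
  also have "\<dots> = \<bar>ps \<epsilon> u e\<bar>" by (simp add: lo_def hi_def)
  finally show ?thesis .
qed

lemma edge_bound:
  fixes Bk :: "nat \<Rightarrow> (complex \<times> complex) set" and th :: "nat \<Rightarrow> real"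
  assumes dj: "disjoint_family_on Bk {..<n}" and Bm: "\<And>k. Bk k \<in> sets borel"
    and BQ: "\<And>k. k < n \<Longrightarrow> Bk k \<subseteq> Q" and Qm: "Q \<in> sets borel" and QA: "\<And>p. p \<in> Q \<Longrightarrow> fst p \<in> A"
  shows "\<bar>\<Sum>k<n. cos (th k) * Lf lborel (FF \<epsilon> e) (hh \<epsilon> u 1 e) (indicator (Bk k))
              + sin (th k) * Lf lborel (FF \<epsilon> e) (hh \<epsilon> u 2 e) (indicator (Bk k))\<bar>
         \<le> (if \<exists>s\<in>{0..1}. edgept \<epsilon> (fst e) (snd e) s \<in> A then \<bar>ps \<epsilon> u e\<bar> else 0)"
proof -
  let ?F = "FF \<epsilon> e" and ?b = "ebox \<epsilon> u e"
  define T where "T k x = cos (th k) * hh \<epsilon> u 1 e x + sin (th k) * hh \<epsilon> u 2 e x" for k x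
  define W where "W x = (\<Sum>k<n. indicator (Bk k) (?F x) * T k x)" for x
  have int1: "integrable lborel (\<lambda>x. indicator (Bk k) (?F x) * hh \<epsilon> u m e x)" for k m
    by (rule Lf_integrable[OF hh_integrable FF_meas]) (auto intro: borel_measurable_indicator[OF Bm] indicator_bound)
  have Tabs: "\<bar>T k x\<bar> \<le> indicator ?b x" for k x
  proof -
    have "T k x = indicator ?b x * sin (th k - snd x)"
      unfolding T_def hh_def cm_def sin_diff by (simp add: algebra_simps)
    then show ?thesis by (simp add: abs_mult indicator_def)
  qed
  have intT: "integrable lborel (\<lambda>x. indicator (Bk k) (?F x) * T k x)" for k
  proof -
    have "(\<lambda>x. indicator (Bk k) (?F x) * T k x) = (\<lambda>x. cos (th k) * (indicator (Bk k) (?F x) * hh \<epsilon> u 1 e x)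
                 + sin (th k) * (indicator (Bk k) (?F x) * hh \<epsilon> u 2 e x))"
      by (auto simp: T_def algebra_simps fun_eq_iff)
    then show ?thesis
      by (auto intro!: Bochner_Integration.integrable_add integrable_mult_right int1)
  qed
  have eqW: "(\<Sum>k<n. cos (th k) * Lf lborel ?F (hh \<epsilon> u 1 e) (indicator (Bk k))
              + sin (th k) * Lf lborel ?F (hh \<epsilon> u 2 e) (indicator (Bk k))) = (\<integral>x. W x \<partial>lborel)"
  proof -
    have "(\<integral>x. indicator (Bk k) (?F x) * T k x \<partial>lborel) =
          cos (th k) * Lf lborel ?F (hh \<epsilon> u 1 e) (indicator (Bk k))
              + sin (th k) * Lf lborel ?F (hh \<epsilon> u 2 e) (indicator (Bk k))" for k
    proof -
      have "(\<integral>x. indicator (Bk k) (?F x) * T k x \<partial>lborel) =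
            (\<integral>x. cos (th k) * (indicator (Bk k) (?F x) * hh \<epsilon> u 1 e x)
                 + sin (th k) * (indicator (Bk k) (?F x) * hh \<epsilon> u 2 e x) \<partial>lborel)"
        unfolding T_def by (simp add: algebra_simps)
      also have "\<dots> = cos (th k) * (\<integral>x. indicator (Bk k) (?F x) * hh \<epsilon> u 1 e x \<partial>lborel)
                 + sin (th k) * (\<integral>x. indicator (Bk k) (?F x) * hh \<epsilon> u 2 e x \<partial>lborel)"
        using int1 by (simp add: Bochner_Integration.integral_add)
      finally show ?thesis unfolding Lf_def .
    qed
    moreover have "(\<integral>x. W x \<partial>lborel) = (\<Sum>k<n. \<integral>x. indicator (Bk k) (?F x) * T k x \<partial>lborel)"
      unfolding W_def by (intro Bochner_Integration.integral_sum intT)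
    ultimately show ?thesis by simp
  qed
  have ib: "integrable lborel (indicator ?b :: _ \<Rightarrow> real)"
    unfolding ebox_def by (rule integrable_real_indicator) (use emeasure_lborel_cbox_finite in auto)
  have intQ: "integrable lborel (\<lambda>x. indicator Q (?F x) * indicator ?b x :: real)"
  proof -
    show ?thesis
      by (rule Lf_integrable[OF ib FF_meas]) (auto intro: borel_measurable_indicator[OF Qm] indicator_bound)
  qed
  have intW: "integrable lborel W"
    unfolding W_def by (intro Bochner_Integration.integrable_sum intT)
  have Wb: "\<bar>W x\<bar> \<le> indicator Q (?F x) * indicator ?b x" for x
  proof (cases "\<exists>k<n. ?F x \<in> Bk k")
    case True
    then obtain k0 where k0: "k0 < n" "?F x \<in> Bk k0" by blast
    have "W x = (\<Sum>k\<in>{..<n}. T k x * indicator (Bk k) (?F x))"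
      unfolding W_def by (simp add: mult.commute)
    also have "\<dots> = T k0 x"
      by (rule sum_indicator_disjoint_family[OF dj k0(2)]) (use k0 in auto)
    finally have "\<bar>W x\<bar> \<le> indicator ?b x" using Tabs by simp
    moreover have "?F x \<in> Q" using BQ k0 by blast
    ultimately show ?thesis by simp
  next
    case False
    then have "W x = 0" unfolding W_def by (auto intro!: sum.neutral)
    then show ?thesis by (simp add: indicator_def)
  qed
  have "\<bar>\<integral>x. W x \<partial>lborel\<bar> \<le> (\<integral>x. indicator Q (?F x) * indicator ?b x \<partial>lborel)"
    by (rule integral_abs_bound_integral[OF intW intQ Wb])
  also have "\<dots> \<le> (if \<exists>s\<in>{0..1}. edgept \<epsilon> (fst e) (snd e) s \<in> A then \<bar>ps \<epsilon> u e\<bar> else 0)"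
  proof (cases "\<exists>s\<in>{0..1}. edgept \<epsilon> (fst e) (snd e) s \<in> A")
    case True
    have "(\<integral>x. indicator Q (?F x) * indicator ?b x \<partial>lborel) \<le> (\<integral>x. indicator ?b x \<partial>lborel :: real)"
      by (rule integral_mono[OF intQ ib]) (auto simp: indicator_def)
    also have "\<dots> = \<bar>ps \<epsilon> u e\<bar>" using ebox_measure by simp
    finally show ?thesis using True by simp
  next
    case False
    have z: "indicator Q (?F x) * indicator ?b x = (0::real)" for x
    proof (cases "x \<in> ?b \<and> ?F x \<in> Q")
      case True
      then have "fst x \<in> {0..1}" "fst (?F x) \<in> A" using ebox_mem[of x \<epsilon> u e] QA[of "?F x"] by auto
      then have False using \<open>\<not> (\<exists>s\<in>{0..1}. edgept \<epsilon> (fst e) (snd e) s \<in> A)\<close>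
        by (auto simp: FF_def)
      then show ?thesis ..
    next
      case False
      then show ?thesis by (auto simp: indicator_def)
    qed
    have "(\<integral>x. indicator Q (?F x) * indicator ?b x \<partial>lborel) = (0::real)"
      by (simp only: z Bochner_Integration.integral_zero)
    then show ?thesis using False by simp
  qed
  finally show ?thesis using eqW by simp
qed

lemma norm2_pair:
  assumes "norm2 v = 1" "l \<in> {1,2}"
  shows "(v (hidx l 1))\<^sup>2 + (v (hidx l 2))\<^sup>2 \<le> 1"
proof -
  have p: "pair2 v v = 1" using assms unfolding norm2_def by simp
  have "l = 1 \<or> l = 2" using assms by auto
  then have "(v (hidx l 1))\<^sup>2 + (v (hidx l 2))\<^sup>2 \<le> pair2 v v"
    by (elim disjE) (auto simp: pair2_def hidx_def power2_eq_square)
  then show ?thesis using p by simp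
qed

lemma sum_rearr:
  fixes a :: "'e \<Rightarrow> real"
  shows "(\<Sum>k\<in>K. c k * (\<Sum>e\<in>E. a e * f e k) + s k * (\<Sum>e\<in>E. a e * g e k)) =
         (\<Sum>e\<in>E. a e * (\<Sum>k\<in>K. c k * f e k + s k * g e k))"
proof -
  have "(\<Sum>k\<in>K. c k * (\<Sum>e\<in>E. a e * f e k) + s k * (\<Sum>e\<in>E. a e * g e k)) =
        (\<Sum>k\<in>K. (\<Sum>e\<in>E. c k * (a e * f e k)) + (\<Sum>e\<in>E. s k * (a e * g e k)))"
    by (simp only: sum_distrib_left)
  also have "\<dots> = (\<Sum>k\<in>K. \<Sum>e\<in>E. c k * (a e * f e k) + s k * (a e * g e k))"
    by (simp only: sum.distrib)
  also have "\<dots> = (\<Sum>k\<in>K. \<Sum>e\<in>E. a e * (c k * f e k + s k * g e k))"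
    by (intro sum.cong refl) (simp add: algebra_simps)
  also have "\<dots> = (\<Sum>e\<in>E. \<Sum>k\<in>K. a e * (c k * f e k + s k * g e k))" by (rule sum.swap)
  also have "\<dots> = (\<Sum>e\<in>E. a e * (\<Sum>k\<in>K. c k * f e k + s k * g e k))" by (simp add: sum_distrib_left)
  finally show ?thesis .
qed

lemma sg_abs: "\<bar>sg \<epsilon> u e\<bar> = 1" unfolding sg_def by auto

lemma bound_l:
  assumes pol: "is_polar \<Omega> (Gcur \<epsilon> \<Omega> u) \<mu> \<xi>" and ep: "\<epsilon> > 0" and l: "l \<in> {1,2}"
    and V: "open V" "compact (closure V)" "closure V \<subseteq> \<Omega> \<times> UNIV"
    and Qm: "Q \<in> sets borel" and QV: "Q \<subseteq> V" and QA: "\<And>p. p \<in> Q \<Longrightarrow> fst p \<in> A"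
    and n: "n \<ge> 1"
  shows "cos (pi / real n) * (\<integral>p. indicator Q p * sqrt ((\<xi> p (hidx l 1))\<^sup>2 + (\<xi> p (hidx l 2))\<^sup>2) \<partial>\<mu>)
     \<le> (\<Sum>e\<in>edges \<epsilon> \<Omega>. if snd e = l \<and> (\<exists>s\<in>{0..1}. edgept \<epsilon> (fst e) (snd e) s \<in> A)
            then \<epsilon> * \<bar>ps \<epsilon> u e\<bar> else 0)"
proof -
  define \<xi>1 where "\<xi>1 p = \<xi> p (hidx l 1)" for p
  define \<xi>2 where "\<xi>2 p = \<xi> p (hidx l 2)" for p
  define Zf where "Zf p = sqrt ((\<xi>1 p)\<^sup>2 + (\<xi>2 p)\<^sup>2)" for p
  define th where "th k = 2 * pi * real k / real n" for k
  define c0 where "c0 = cos (pi / real n)"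
  define cond where "cond k p \<longleftrightarrow> Zf p * c0 \<le> \<xi>1 p * cos (th k) + \<xi>2 p * sin (th k)" for k p
  define Bk where "Bk k = {p \<in> Q. cond k p \<and> (\<forall>j<k. \<not> cond j p)}" for k
  have sM: "sets \<mu> = sets borel" using pol by (simp add: is_polar_def)
  have idm: "id \<in> \<mu> \<rightarrow>\<^sub>M borel"
    using measurable_ident_sets[OF sM] by (simp add: id_def)
  have mI: "(\<lambda>p. \<xi> p I) \<in> borel_measurable borel" for I
  proof -
    have "(\<lambda>p. \<xi> p I) \<in> borel_measurable \<mu>" using pol by (simp add: is_polar_def)
    then show ?thesis using measurable_cong_sets[OF sM refl, of "borel :: real measure"] by simp
  qed
  have m1[measurable]: "\<xi>1 \<in> borel_measurable borel" unfolding \<xi>1_def[abs_def] by (rule mI)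
  have m2[measurable]: "\<xi>2 \<in> borel_measurable borel" unfolding \<xi>2_def[abs_def] by (rule mI)
  have Qm'[measurable]: "Q \<in> sets borel" by (rule Qm)
  have Bm: "Bk k \<in> sets borel" for k
    unfolding Bk_def cond_def Zf_def by measurable
  have BQ: "Bk k \<subseteq> Q" for k unfolding Bk_def by auto
  have BV: "Bk k \<subseteq> V" for k using BQ QV by blast
  have dj: "disjoint_family_on Bk {..<n}"
    unfolding disjoint_family_on_def
  proof (intro ballI impI)
    fix i j assume "i \<in> {..<n}" "j \<in> {..<n}" "i \<noteq> j"
    then have "i < j \<or> j < i" by auto
    then show "Bk i \<inter> Bk j = {}" unfolding Bk_def by auto
  qed
  define h1 where "h1 p = indicator V p * \<xi>1 p" for p
  define h2 where "h2 p = indicator V p * \<xi>2 p" for p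
  have ih1: "integrable \<mu> h1" unfolding h1_def \<xi>1_def by (rule h0_integrable[OF pol V])
  have ih2: "integrable \<mu> h2" unfolding h2_def \<xi>2_def by (rule h0_integrable[OF pol V])
  have iB: "integrable \<mu> (\<lambda>p. indicator (Bk k) (id p) * h p)" if "integrable \<mu> h" for k and h :: "complex \<times> complex \<Rightarrow> real"
    by (rule Lf_integrable[OF that idm]) (auto intro: borel_measurable_indicator[OF Bm] indicator_bound)
  define R where "R p = (\<Sum>k<n. cos (th k) * (indicator (Bk k) (id p) * h1 p)
                          + sin (th k) * (indicator (Bk k) (id p) * h2 p))" for p
  have iR: "integrable \<mu> R"
    unfolding R_def using iB[OF ih1] iB[OF ih2]
    by (intro Bochner_Integration.integrable_sum Bochner_Integration.integrable_add integrable_mult_right) auto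
  have intR: "(\<integral>p. R p \<partial>\<mu>) = (\<Sum>k<n. cos (th k) * JI \<epsilon> \<Omega> u l 1 (indicator (Bk k))
                                      + sin (th k) * JI \<epsilon> \<Omega> u l 2 (indicator (Bk k)))"
  proof -
    have "(\<integral>p. R p \<partial>\<mu>) = (\<Sum>k<n. cos (th k) * Lf \<mu> id h1 (indicator (Bk k))
                                      + sin (th k) * Lf \<mu> id h2 (indicator (Bk k)))"
      unfolding R_def Lf_def using iB[OF ih1] iB[OF ih2]
      by (subst Bochner_Integration.integral_sum) (auto intro!: sum.cong simp: Bochner_Integration.integral_add)
    also have "\<dots> = (\<Sum>k<n. cos (th k) * JI \<epsilon> \<Omega> u l 1 (indicator (Bk k))
                                      + sin (th k) * JI \<epsilon> \<Omega> u l 2 (indicator (Bk k)))"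
      unfolding h1_def h2_def \<xi>1_def \<xi>2_def
      using borel_identity[OF pol l _ V Bm BV] by simp
    finally show ?thesis .
  qed
  have JIbound: "(\<Sum>k<n. cos (th k) * JI \<epsilon> \<Omega> u l 1 (indicator (Bk k))
                  + sin (th k) * JI \<epsilon> \<Omega> u l 2 (indicator (Bk k)))
     \<le> (\<Sum>e\<in>edges \<epsilon> \<Omega>. if snd e = l \<and> (\<exists>s\<in>{0..1}. edgept \<epsilon> (fst e) (snd e) s \<in> A)
            then \<epsilon> * \<bar>ps \<epsilon> u e\<bar> else 0)"
  proof -
    have "(\<Sum>k<n. cos (th k) * JI \<epsilon> \<Omega> u l 1 (indicator (Bk k))
                  + sin (th k) * JI \<epsilon> \<Omega> u l 2 (indicator (Bk k)))
       = (\<Sum>e\<in>edges \<epsilon> \<Omega>. coef \<epsilon> u l e * (\<Sum>k<n. cos (th k) * Lf lborel (FF \<epsilon> e) (hh \<epsilon> u 1 e) (indicator (Bk k))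
              + sin (th k) * Lf lborel (FF \<epsilon> e) (hh \<epsilon> u 2 e) (indicator (Bk k))))"
      unfolding JI_def Jsum_def by (rule sum_rearr)
    also have "\<dots> \<le> (\<Sum>e\<in>edges \<epsilon> \<Omega>. if snd e = l \<and> (\<exists>s\<in>{0..1}. edgept \<epsilon> (fst e) (snd e) s \<in> A)
            then \<epsilon> * \<bar>ps \<epsilon> u e\<bar> else 0)"
    proof (rule sum_mono)
      fix e
      let ?X = "(\<Sum>k<n. cos (th k) * Lf lborel (FF \<epsilon> e) (hh \<epsilon> u 1 e) (indicator (Bk k))
              + sin (th k) * Lf lborel (FF \<epsilon> e) (hh \<epsilon> u 2 e) (indicator (Bk k)))"
      have eb: "\<bar>?X\<bar> \<le> (if \<exists>s\<in>{0..1}. edgept \<epsilon> (fst e) (snd e) s \<in> A then \<bar>ps \<epsilon> u e\<bar> else 0)"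
        by (rule edge_bound[OF dj Bm BQ Qm QA])
      show "coef \<epsilon> u l e * ?X \<le> (if snd e = l \<and> (\<exists>s\<in>{0..1}. edgept \<epsilon> (fst e) (snd e) s \<in> A)
            then \<epsilon> * \<bar>ps \<epsilon> u e\<bar> else 0)"
      proof (cases "snd e = l")
        case True
        have "coef \<epsilon> u l e * ?X \<le> \<bar>coef \<epsilon> u l e\<bar> * \<bar>?X\<bar>"
          using abs_ge_self[of "coef \<epsilon> u l e * ?X"] by (simp only: abs_mult)
        also have "\<bar>coef \<epsilon> u l e\<bar> = \<epsilon>"
          using True ep by (simp add: coef_def abs_mult sg_abs power_abs)
        finally have "coef \<epsilon> u l e * ?X \<le> \<epsilon> * \<bar>?X\<bar>" .
        also have "\<dots> \<le> \<epsilon> * (if \<exists>s\<in>{0..1}. edgept \<epsilon> (fst e) (snd e) s \<in> A then \<bar>ps \<epsilon> u e\<bar> else 0)"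
          using eb ep by (intro mult_left_mono) auto
        finally have X: "coef \<epsilon> u l e * ?X \<le> \<epsilon> * (if \<exists>s\<in>{0..1}. edgept \<epsilon> (fst e) (snd e) s \<in> A then \<bar>ps \<epsilon> u e\<bar> else 0)" .
        show ?thesis
        proof (cases "\<exists>s\<in>{0..1}. edgept \<epsilon> (fst e) (snd e) s \<in> A")
          case True2: True
          show ?thesis using X by (simp only: if_P[OF conjI[OF True True2]] if_P[OF True2])
        next
          case False2: False
          have nc: "\<not> (snd e = l \<and> (\<exists>s\<in>{0..1}. edgept \<epsilon> (fst e) (snd e) s \<in> A))" using False2 by blast
          show ?thesis using X by (simp only: if_not_P[OF nc] if_not_P[OF False2] mult_zero_right)
        qed
      next
        case False
        then show ?thesis by (simp add: coef_def)
      qed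
    qed
    finally show ?thesis .
  qed
  have pw: "c0 * (indicator Q p * Zf p) \<le> R p" for p
  proof (cases "p \<in> Q")
    case False
    then have "indicator (Bk k) p = (0::real)" for k using BQ[of k] by (auto simp: indicator_def)
    then show ?thesis using False by (simp add: R_def)
  next
    case True
    obtain k where k: "k < n" "cond k p"
      using dir_exists[OF n, of "\<xi>1 p" "\<xi>2 p"] unfolding cond_def Zf_def th_def c0_def
      by (auto simp: mult.commute)
    define k0 where "k0 = (LEAST k. cond k p)"
    have k0: "cond k0 p" "k0 \<le> k" unfolding k0_def using k(2) by (auto intro: LeastI Least_le)
    have k0n: "k0 < n" using k0 k by simp
    have nb: "\<not> cond j p" if "j < k0" for j using not_less_Least[OF that[unfolded k0_def]] unfolding k0_def .
    have pB: "p \<in> Bk k0" unfolding Bk_def using True k0 nb by auto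
    have pV: "p \<in> V" using True QV by auto
    have "R p = (\<Sum>k\<in>{..<n}. (\<xi>1 p * cos (th k) + \<xi>2 p * sin (th k)) * indicator (Bk k) p)"
      unfolding R_def h1_def h2_def using pV by (intro sum.cong refl) (simp add: algebra_simps)
    also have "\<dots> = \<xi>1 p * cos (th k0) + \<xi>2 p * sin (th k0)"
      by (rule sum_indicator_disjoint_family[OF dj pB]) (use k0n in auto)
    finally have "R p = \<xi>1 p * cos (th k0) + \<xi>2 p * sin (th k0)" .
    then show ?thesis using k0(1) True unfolding cond_def by (simp add: mult.commute)
  qed
  have iL: "integrable \<mu> (\<lambda>p. indicator Q p * Zf p)"
  proof (rule Bochner_Integration.integrable_bound)
    show "integrable \<mu> (indicator V :: _ \<Rightarrow> real)"
      using polar_finite[OF pol V] by simp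
    show "(\<lambda>p. indicator Q p * Zf p) \<in> borel_measurable \<mu>"
      using measurable_cong_sets[OF sM refl, of "borel :: real measure"]
      unfolding Zf_def by simp measurable
    have "AE p in \<mu>. norm2 (\<xi> p) = 1" using pol by (simp add: is_polar_def)
    then show "AE p in \<mu>. norm (indicator Q p * Zf p) \<le> norm (indicator V p :: real)"
    proof eventually_elim
      case (elim p)
      have "(\<xi>1 p)\<^sup>2 + (\<xi>2 p)\<^sup>2 \<le> 1" unfolding \<xi>1_def \<xi>2_def by (rule norm2_pair[OF elim l])
      then have "Zf p \<le> 1" unfolding Zf_def by simp
      moreover have "Zf p \<ge> 0" unfolding Zf_def by simp
      ultimately show ?case using QV by (auto simp: indicator_def)
    qed
  qed
  have "c0 * (\<integral>p. indicator Q p * Zf p \<partial>\<mu>) = (\<integral>p. c0 * (indicator Q p * Zf p) \<partial>\<mu>)"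
    by simp
  also have "\<dots> \<le> (\<integral>p. R p \<partial>\<mu>)"
    by (rule integral_mono[OF _ iR pw]) (use iL in simp)
  also have "\<dots> \<le> (\<Sum>e\<in>edges \<epsilon> \<Omega>. if snd e = l \<and> (\<exists>s\<in>{0..1}. edgept \<epsilon> (fst e) (snd e) s \<in> A)
            then \<epsilon> * \<bar>ps \<epsilon> u e\<bar> else 0)"
    using intR JIbound by simp
  finally show ?thesis unfolding c0_def Zf_def \<xi>1_def \<xi>2_def .
qed


lemma Lpt_add: "Lpt \<epsilon> (i + j) = Lpt \<epsilon> i + Lpt \<epsilon> j"
  by (cases i, cases j) (simp add: Lpt_def complex_eq_iff algebra_simps)

lemma Lpt_evec: "l \<in> {1,2} \<Longrightarrow> norm (Lpt \<epsilon> (evec l)) = \<bar>\<epsilon>\<bar>"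
  by (auto simp: Lpt_def evec_def complex_norm)

lemma edgept_dist1:
  assumes "l \<in> {1,2}" "s \<in> {0..1}" "\<epsilon> > 0"
  shows "dist (edgept \<epsilon> i l s) (Lpt \<epsilon> (i + evec l)) \<le> \<epsilon>"
proof -
  have "norm (edgept \<epsilon> i l s - Lpt \<epsilon> (i + evec l)) = \<epsilon> * s"
    using assms by (auto simp: edgept_def norm_mult)
  also have "\<dots> \<le> \<epsilon>" using assms by auto
  finally show ?thesis by (simp add: dist_norm)
qed

lemma edgept_dist0:
  assumes "l \<in> {1,2}" "s \<in> {0..1}" "\<epsilon> > 0"
  shows "dist (edgept \<epsilon> i l s) (Lpt \<epsilon> i) \<le> 2 * \<epsilon>"
proof -
  have "dist (edgept \<epsilon> i l s) (Lpt \<epsilon> i) \<le> dist (edgept \<epsilon> i l s) (Lpt \<epsilon> (i + evec l)) + dist (Lpt \<epsilon> (i + evec l)) (Lpt \<epsilon> i)"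
    by (rule dist_triangle)
  also have "dist (Lpt \<epsilon> (i + evec l)) (Lpt \<epsilon> i) = \<epsilon>"
    using Lpt_evec[OF assms(1), of \<epsilon>] assms(3) by (simp add: dist_norm Lpt_add)
  finally show ?thesis using edgept_dist1[OF assms, of i] by simp
qed

lemma Lpt1_dist: "l \<in> {1,2} \<Longrightarrow> dist (Lpt 1 i) (Lpt 1 (i + evec l)) = 1"
  using Lpt_evec[of l 1] by (simp add: dist_norm Lpt_add norm_minus_commute)

lemma finite_lattice:
  assumes "bounded S" "\<epsilon> > 0"
  shows "finite {i. Lpt \<epsilon> i \<in> S}"
proof -
  obtain r where r: "\<And>x. x \<in> S \<Longrightarrow> norm x \<le> r" using assms(1) bounded_iff by blast
  define M where "M = \<lceil>r / \<epsilon>\<rceil>"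
  have "{i. Lpt \<epsilon> i \<in> S} \<subseteq> {-M..M} \<times> {-M..M}"
  proof
    fix i assume "i \<in> {i. Lpt \<epsilon> i \<in> S}"
    then have n: "norm (Lpt \<epsilon> i) \<le> r" using r by auto
    obtain a b where i: "i = (a, b)" by (cases i)
    have "\<bar>\<epsilon> * of_int a\<bar> \<le> r" using n abs_Re_le_cmod[of "Lpt \<epsilon> i"] by (simp add: Lpt_def i)
    moreover have "\<bar>\<epsilon> * of_int b\<bar> \<le> r" using n abs_Im_le_cmod[of "Lpt \<epsilon> i"] by (simp add: Lpt_def i)
    ultimately have "\<bar>of_int a\<bar> \<le> r / \<epsilon>" "\<bar>of_int b\<bar> \<le> r / \<epsilon>"
      using assms(2) by (auto simp: abs_mult field_simps)
    then have "\<bar>a\<bar> \<le> M" "\<bar>b\<bar> \<le> M" unfolding M_def by (auto intro: le_ceiling_iff[THEN iffD2]) 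
    then show "i \<in> {-M..M} \<times> {-M..M}" using i by auto
  qed
  then show ?thesis by (rule finite_subset) auto
qed

lemma evec_inj: "l \<in> {1,2} \<Longrightarrow> l' \<in> {1,2} \<Longrightarrow> evec l = evec l' \<Longrightarrow> l = l'"
  by (auto simp: evec_def split: if_splits)

lemma evec_nz: "l \<in> {1,2} \<Longrightarrow> l' \<in> {1,2} \<Longrightarrow> evec l + evec l' \<noteq> 0"
  by (auto simp: evec_def zero_prod_def)

lemma energy_bound:
  assumes bd: "bounded \<Omega>" and ep: "\<epsilon> > 0" and u: "u \<in> PC \<epsilon> (Sset N')"
    and dball: "\<And>x. x \<in> A \<Longrightarrow> ball x d \<subseteq> \<Omega>" and ed: "2 * \<epsilon> < d"
  shows "(\<Sum>e\<in>edges \<epsilon> \<Omega>. if (\<exists>s\<in>{0..1}. edgept \<epsilon> (fst e) (snd e) s \<in> A) then \<epsilon> * \<bar>ps \<epsilon> u e\<bar> else 0)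
         \<le> energy \<epsilon> \<Omega> u"
proof -
  have unit: "norm (u x) = 1" for x using u Sset_norm unfolding PC_def by blast
  define f where "f = (\<lambda>(i, j). \<epsilon> * dS1 (u (Lpt \<epsilon> i)) (u (Lpt \<epsilon> j)))"
  have fnn: "f p \<ge> 0" for p
    unfolding f_def using ep by (cases p) (simp add: dS1_Psi[OF unit unit])
  have en: "energy \<epsilon> \<Omega> u = 1/2 * sum f (nn_pairs \<epsilon> \<Omega>)"
    unfolding energy_def f_def by simp
  have fnn_pairs: "finite (nn_pairs \<epsilon> \<Omega>)"
  proof (rule finite_subset)
    show "nn_pairs \<epsilon> \<Omega> \<subseteq> {i. Lpt \<epsilon> i \<in> \<Omega>} \<times> {i. Lpt \<epsilon> i \<in> \<Omega>}"
      unfolding nn_pairs_def by auto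
    show "finite ({i. Lpt \<epsilon> i \<in> \<Omega>} \<times> {i. Lpt \<epsilon> i \<in> \<Omega>})"
      using finite_lattice[OF bd ep] by auto
  qed
  have e0: "energy \<epsilon> \<Omega> u \<ge> 0" unfolding en using fnn by (simp add: sum_nonneg)
  show ?thesis
  proof (cases "finite (edges \<epsilon> \<Omega>)")
    case False
    then show ?thesis using e0 by simp
  next
    case True
    define EA where "EA = {e \<in> edges \<epsilon> \<Omega>. \<exists>s\<in>{0..1}. edgept \<epsilon> (fst e) (snd e) s \<in> A}"
    define g where "g e = \<epsilon> * \<bar>ps \<epsilon> u e\<bar>" for e
    define \<phi>1 where "\<phi>1 e = (fst e, fst e + evec (snd e))" for e :: "(int \<times> int) \<times> nat"
    define \<phi>2 where "\<phi>2 e = (fst e + evec (snd e), fst e)" for e :: "(int \<times> int) \<times> nat"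
    have fEA: "finite EA" using True unfolding EA_def by auto
    have lhs: "(\<Sum>e\<in>edges \<epsilon> \<Omega>. if (\<exists>s\<in>{0..1}. edgept \<epsilon> (fst e) (snd e) s \<in> A) then \<epsilon> * \<bar>ps \<epsilon> u e\<bar> else 0)
        = sum g EA"
      unfolding EA_def g_def by (rule sum.inter_filter[OF True, symmetric])
    have l12: "snd e \<in> {1,2}" if "e \<in> EA" for e using that unfolding EA_def edges_def by auto
    have g1: "g e = f (\<phi>1 e)" for e
      unfolding g_def f_def \<phi>1_def ps_def zA_def zB_def by (simp add: dS1_Psi[OF unit unit])
    have g2: "g e = f (\<phi>2 e)" for e
      unfolding g1 f_def \<phi>1_def \<phi>2_def prod.case by (rule arg_cong[where f="\<lambda>x. \<epsilon> * x"], rule dS1_sym)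
    have inj1: "inj_on \<phi>1 EA"
    proof (rule inj_onI)
      fix e e' assume ee: "e \<in> EA" "e' \<in> EA" "\<phi>1 e = \<phi>1 e'"
      have a: "fst e = fst e'" and b: "fst e + evec (snd e) = fst e' + evec (snd e')"
        using ee(3) by (simp_all add: \<phi>1_def prod_eq_iff)
      have "evec (snd e) = evec (snd e')" using b unfolding a by simp
      then have "snd e = snd e'" using evec_inj l12 ee(1,2) by blast
      then show "e = e'" using a by (simp add: prod_eq_iff)
    qed
    have inj2: "inj_on \<phi>2 EA"
    proof (rule inj_onI)
      fix e e' assume ee: "e \<in> EA" "e' \<in> EA" "\<phi>2 e = \<phi>2 e'"
      have a: "fst e = fst e'" and b: "fst e + evec (snd e) = fst e' + evec (snd e')"
        using ee(3) by (simp_all add: \<phi>2_def prod_eq_iff)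
      have "evec (snd e) = evec (snd e')" using b unfolding a by simp
      then have "snd e = snd e'" using evec_inj l12 ee(1,2) by blast
      then show "e = e'" using a by (simp add: prod_eq_iff)
    qed
    have disj: "\<phi>1 ` EA \<inter> \<phi>2 ` EA = {}"
    proof (rule ccontr)
      assume "\<phi>1 ` EA \<inter> \<phi>2 ` EA \<noteq> {}"
      then obtain e e' where ee: "e \<in> EA" "e' \<in> EA" "\<phi>1 e = \<phi>2 e'" by blast
      then have "fst e = fst e' + evec (snd e')" "fst e + evec (snd e) = fst e'" by (auto simp: \<phi>1_def \<phi>2_def)
      then have "evec (snd e) + evec (snd e') = 0" by (simp add: algebra_simps)
      then show False using evec_nz l12 ee by blast
    qed
    have sub: "\<phi>1 ` EA \<union> \<phi>2 ` EA \<subseteq> nn_pairs \<epsilon> \<Omega>"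
    proof -
      have "(fst e, fst e + evec (snd e)) \<in> nn_pairs \<epsilon> \<Omega> \<and> (fst e + evec (snd e), fst e) \<in> nn_pairs \<epsilon> \<Omega>"
        if e: "e \<in> EA" for e
      proof -
        obtain s where s: "s \<in> {0..1}" "edgept \<epsilon> (fst e) (snd e) s \<in> A" using e unfolding EA_def by blast
        have l: "snd e \<in> {1,2}" by (rule l12[OF e])
        have b: "ball (edgept \<epsilon> (fst e) (snd e) s) d \<subseteq> \<Omega>" by (rule dball[OF s(2)])
        have "Lpt \<epsilon> (fst e) \<in> \<Omega>"
          using b edgept_dist0[OF l s(1) ep, of "fst e"] ed by (auto simp: subset_eq)
        moreover have "Lpt \<epsilon> (fst e + evec (snd e)) \<in> \<Omega>"
          using b edgept_dist1[OF l s(1) ep, of "fst e"] ed ep by (auto simp: subset_eq)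
        moreover have "dist (Lpt 1 (fst e)) (Lpt 1 (fst e + evec (snd e))) = 1" by (rule Lpt1_dist[OF l])
        moreover have "dist (Lpt 1 (fst e + evec (snd e))) (Lpt 1 (fst e)) = 1"
          using Lpt1_dist[OF l] by (simp add: dist_commute)
        ultimately show ?thesis unfolding nn_pairs_def by blast
      qed
      then show ?thesis unfolding \<phi>1_def \<phi>2_def by auto
    qed
    have "2 * sum g EA = sum f (\<phi>1 ` EA) + sum f (\<phi>2 ` EA)"
      using sum.reindex[OF inj1, of f] sum.reindex[OF inj2, of f] g1 g2 by (simp add: o_def)
    also have "\<dots> = sum f (\<phi>1 ` EA \<union> \<phi>2 ` EA)"
      by (rule sum.union_disjoint[symmetric]) (use fEA disj in auto)
    also have "\<dots> \<le> sum f (nn_pairs \<epsilon> \<Omega>)"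
      by (rule sum_mono2[OF fnn_pairs sub]) (rule fnn)
    finally show ?thesis unfolding lhs en by simp
  qed
qed


lemma QZ_integrable:
  assumes pol: "is_polar \<Omega> G \<mu> \<xi>" and l: "l \<in> {1,2}"
    and V: "open V" "compact (closure V)" "closure V \<subseteq> \<Omega> \<times> UNIV"
    and Qm: "Q \<in> sets borel" and QV: "Q \<subseteq> V"
  shows "integrable \<mu> (\<lambda>p. indicator Q p * sqrt ((\<xi> p (hidx l 1))\<^sup>2 + (\<xi> p (hidx l 2))\<^sup>2))"
proof (rule Bochner_Integration.integrable_bound)
  have sM: "sets \<mu> = sets borel" using pol by (simp add: is_polar_def)
  have mI[measurable]: "(\<lambda>p. \<xi> p I) \<in> borel_measurable \<mu>" for I using pol by (simp add: is_polar_def)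
  have Qm'[measurable]: "Q \<in> sets \<mu>" using Qm sM by simp
  show "integrable \<mu> (indicator V :: _ \<Rightarrow> real)"
    using polar_finite[OF pol V] by simp
  show "(\<lambda>p. indicator Q p * sqrt ((\<xi> p (hidx l 1))\<^sup>2 + (\<xi> p (hidx l 2))\<^sup>2)) \<in> borel_measurable \<mu>"
    by measurable
  have "AE p in \<mu>. norm2 (\<xi> p) = 1" using pol by (simp add: is_polar_def)
  then show "AE p in \<mu>. norm (indicator Q p * sqrt ((\<xi> p (hidx l 1))\<^sup>2 + (\<xi> p (hidx l 2))\<^sup>2))
      \<le> norm (indicator V p :: real)"
  proof eventually_elim
    case (elim p)
    have "(\<xi> p (hidx l 1))\<^sup>2 + (\<xi> p (hidx l 2))\<^sup>2 \<le> 1" by (rule norm2_pair[OF elim l])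
    then have "sqrt ((\<xi> p (hidx l 1))\<^sup>2 + (\<xi> p (hidx l 2))\<^sup>2) \<le> 1" by simp
    then show ?case using QV by (auto simp: indicator_def)
  qed
qed

lemma lim_cos:
  fixes x y :: real
  assumes "\<And>n. n \<ge> 1 \<Longrightarrow> cos (pi / real n) * x \<le> y"
  shows "x \<le> y"
proof (rule LIMSEQ_le_const2)
  have "(\<lambda>n. cos (pi * inverse (real n)) * x) \<longlonglongrightarrow> cos (pi * 0) * x"
    by (intro tendsto_intros lim_inverse_n)
  then show "(\<lambda>n. cos (pi / real n) * x) \<longlonglongrightarrow> x" by (simp add: divide_inverse)
  show "\<exists>N. \<forall>n\<ge>N. cos (pi / real n) * x \<le> y" using assms by blast
qed

lemma main_bound:
  assumes pol: "is_polar \<Omega> (Gcur \<epsilon> \<Omega> u) \<mu> \<xi>" and ep: "\<epsilon> > 0" and bd: "bounded \<Omega>"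
    and u: "u \<in> PC \<epsilon> (Sset N')" and A: "open A" "compact (closure A)" "closure A \<subseteq> \<Omega>"
    and dball: "\<And>x. x \<in> A \<Longrightarrow> ball x d \<subseteq> \<Omega>" and ed: "2 * \<epsilon> < d"
  shows "(\<integral>\<^sup>+ p\<in>A \<times> UNIV. ennreal (Phi (\<xi> p)) \<partial>\<mu>) \<le> ennreal (energy \<epsilon> \<Omega> u)"
proof -
  define M where "M e \<longleftrightarrow> (\<exists>s\<in>{0..1}. edgept \<epsilon> (fst e) (snd e) s \<in> A)" for e
  define S where "S l = (\<Sum>e\<in>edges \<epsilon> \<Omega>. if snd e = l \<and> M e then \<epsilon> * \<bar>ps \<epsilon> u e\<bar> else 0)" for l
  have S0: "S l \<ge> 0" for l unfolding S_def using ep by (auto intro!: sum_nonneg)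
  have SE: "S 1 + S 2 \<le> energy \<epsilon> \<Omega> u"
  proof -
    have "S 1 + S 2 = (\<Sum>e\<in>edges \<epsilon> \<Omega>. if M e then \<epsilon> * \<bar>ps \<epsilon> u e\<bar> else 0)"
      unfolding S_def sum.distrib[symmetric]
    proof (rule sum.cong[OF refl])
      fix e assume "e \<in> edges \<epsilon> \<Omega>"
      then have "snd e = 1 \<or> snd e = 2" unfolding edges_def by auto
      then show "(if snd e = 1 \<and> M e then \<epsilon> * \<bar>ps \<epsilon> u e\<bar> else 0) + (if snd e = 2 \<and> M e then \<epsilon> * \<bar>ps \<epsilon> u e\<bar> else 0)
          = (if M e then \<epsilon> * \<bar>ps \<epsilon> u e\<bar> else 0)"
        by (elim disjE) simp_all
    qed
    also have "\<dots> \<le> energy \<epsilon> \<Omega> u" unfolding M_def by (rule energy_bound[OF bd ep u dball ed])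
    finally show ?thesis .
  qed
  have mI[measurable]: "(\<lambda>p. \<xi> p I) \<in> borel_measurable \<mu>" for I using pol by (simp add: is_polar_def)
  have sM: "sets \<mu> = sets borel" using pol by (simp add: is_polar_def)
  define Z where "Z l p = sqrt ((\<xi> p (hidx l 1))\<^sup>2 + (\<xi> p (hidx l 2))\<^sup>2)" for l p
  have Phi_eq: "Phi (\<xi> p) = Z 2 p + Z 1 p" for p unfolding Phi_def Z_def hidx_def by simp
  have bR: "(\<integral>\<^sup>+ p. ennreal (Phi (\<xi> p)) * indicator (A \<times> ball 0 R) p \<partial>\<mu>) \<le> ennreal (energy \<epsilon> \<Omega> u)"
    if R: "R \<ge> 0" for R
  proof -
    define Q where "Q = A \<times> ball (0::complex) R"
    define V where "V = A \<times> ball (0::complex) (R+1)"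
    have Vo: "open V" unfolding V_def using A(1) by (intro open_Times) auto
    have cV: "closure V = closure A \<times> cball 0 (R+1)" unfolding V_def closure_Times using R by simp
    have Vc: "compact (closure V)" unfolding cV using A(2) by (intro compact_Times) auto
    have V\<Omega>: "closure V \<subseteq> \<Omega> \<times> UNIV" unfolding cV using A(3) by auto
    have Qm: "Q \<in> sets borel" unfolding Q_def using A(1) by (intro borel_open open_Times) auto
    have Qm'[measurable]: "Q \<in> sets \<mu>" using Qm sM by simp
    have QV: "Q \<subseteq> V" unfolding Q_def V_def by auto
    have QA: "\<And>p. p \<in> Q \<Longrightarrow> fst p \<in> A" unfolding Q_def by auto
    have IS: "(\<integral>p. indicator Q p * Z l p \<partial>\<mu>) \<le> S l" if l: "l \<in> {1,2}" for l
      unfolding Z_def S_def M_def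
      by (rule lim_cos) (rule bound_l[OF pol ep l Vo Vc V\<Omega> Qm QV QA])
    have iZ: "integrable \<mu> (\<lambda>p. indicator Q p * Z l p)" if "l \<in> {1,2}" for l
      unfolding Z_def by (rule QZ_integrable[OF pol that Vo Vc V\<Omega> Qm QV])
    have nnZ: "(\<integral>\<^sup>+ p. ennreal (indicator Q p * Z l p) \<partial>\<mu>) = ennreal (\<integral>p. indicator Q p * Z l p \<partial>\<mu>)"
      if "l \<in> {1,2}" for l
      by (rule nn_integral_eq_integral[OF iZ[OF that]]) (simp add: Z_def)
    have "(\<integral>\<^sup>+ p. ennreal (Phi (\<xi> p)) * indicator (A \<times> ball 0 R) p \<partial>\<mu>) =
          (\<integral>\<^sup>+ p. ennreal (indicator Q p * Z 2 p) + ennreal (indicator Q p * Z 1 p) \<partial>\<mu>)"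
    proof (rule nn_integral_cong)
      fix p
      show "ennreal (Phi (\<xi> p)) * indicator (A \<times> ball 0 R) p =
            ennreal (indicator Q p * Z 2 p) + ennreal (indicator Q p * Z 1 p)"
      proof (cases "p \<in> Q")
        case True
        have i1: "indicator (A \<times> ball 0 R) p = (1::ennreal)" using True by (simp add: Q_def)
        have i2: "indicator Q p = (1::real)" using True by simp
        have z: "Z 2 p \<ge> 0" "Z 1 p \<ge> 0" by (simp_all add: Z_def)
        show ?thesis unfolding i1 i2 Phi_eq mult_1 mult_1_right by (rule ennreal_plus[OF z])
      next
        case False
        then show ?thesis by (simp add: Q_def)
      qed
    qed
    also have "\<dots> = (\<integral>\<^sup>+ p. ennreal (indicator Q p * Z 2 p) \<partial>\<mu>) + (\<integral>\<^sup>+ p. ennreal (indicator Q p * Z 1 p) \<partial>\<mu>)"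
      by (rule nn_integral_add) (unfold Z_def, measurable)
    also have "\<dots> = ennreal (\<integral>p. indicator Q p * Z 2 p \<partial>\<mu>) + ennreal (\<integral>p. indicator Q p * Z 1 p \<partial>\<mu>)"
      using nnZ by simp
    also have "\<dots> \<le> ennreal (S 2) + ennreal (S 1)"
      using IS[of 2] IS[of 1] by (intro add_mono ennreal_leI) simp_all
    also have "\<dots> = ennreal (S 1 + S 2)" by (rule trans[OF add.commute ennreal_plus[OF S0 S0, symmetric]])
    also have "\<dots> \<le> ennreal (energy \<epsilon> \<Omega> u)" using SE by (rule ennreal_leI)
    finally show ?thesis .
  qed
  define f where "f n p = ennreal (Phi (\<xi> p)) * indicator (A \<times> ball (0::complex) (real n)) p" for n p
  have inc: "incseq f"
  proof (rule incseq_SucI)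
    fix n
    have sub: "A \<times> ball (0::complex) (real n) \<subseteq> A \<times> ball 0 (real (Suc n))" by auto
    show "f n \<le> f (Suc n)"
      unfolding le_fun_def f_def
    proof
      fix p
      have "indicator (A \<times> ball (0::complex) (real n)) p \<le> (indicator (A \<times> ball 0 (real (Suc n))) p :: ennreal)"
        using sub by (auto simp: indicator_def)
      then show "ennreal (Phi (\<xi> p)) * indicator (A \<times> ball 0 (real n)) p \<le> ennreal (Phi (\<xi> p)) * indicator (A \<times> ball 0 (real (Suc n))) p"
        by (rule mult_left_mono) simp
    qed
  qed
  have Am[measurable]: "A \<times> ball (0::complex) r \<in> sets \<mu>" for r
    using sM A(1) by (simp add: borel_open open_Times)
  have mPhi[measurable]: "(\<lambda>p. Phi (\<xi> p)) \<in> borel_measurable \<mu>" unfolding Phi_def by measurable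
  have mf: "f n \<in> borel_measurable \<mu>" for n unfolding f_def by measurable
  have sup: "(SUP n. f n p) = ennreal (Phi (\<xi> p)) * indicator (A \<times> UNIV) p" for p
  proof (cases "fst p \<in> A")
    case False
    then have "f n p = 0" for n by (cases p) (simp add: f_def)
    then show ?thesis using False by (cases p) simp
  next
    case True
    obtain n0 :: nat where n0: "norm (snd p) < real n0" using reals_Archimedean2 by blast
    have le: "f n p \<le> ennreal (Phi (\<xi> p))" for n
    proof -
      have "indicator (A \<times> ball (0::complex) (real n)) p \<le> (1::ennreal)" by (simp add: indicator_def)
      then show ?thesis unfolding f_def using mult_left_mono[of _ 1 "ennreal (Phi (\<xi> p))"] by simp
    qed
    have "p \<in> A \<times> ball 0 (real n0)" using True n0 by (cases p) (simp add: dist_norm)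
    then have eq: "f n0 p = ennreal (Phi (\<xi> p))" unfolding f_def by simp
    have "(SUP n. f n p) = ennreal (Phi (\<xi> p))"
    proof (rule antisym)
      show "(SUP n. f n p) \<le> ennreal (Phi (\<xi> p))" by (rule SUP_least) (rule le)
      show "ennreal (Phi (\<xi> p)) \<le> (SUP n. f n p)" unfolding eq[symmetric] by (rule SUP_upper) simp
    qed
    then show ?thesis using True by (cases p) simp
  qed
  have "(\<integral>\<^sup>+ p\<in>A \<times> UNIV. ennreal (Phi (\<xi> p)) \<partial>\<mu>) = (\<integral>\<^sup>+ p. (SUP n. f n p) \<partial>\<mu>)"
    by (simp add: sup)
  also have "\<dots> = (SUP n. integral\<^sup>N \<mu> (f n))"
    by (rule nn_integral_monotone_convergence_SUP[OF inc mf])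
  also have "\<dots> \<le> ennreal (energy \<epsilon> \<Omega> u)"
    unfolding f_def by (rule SUP_least) (rule bR, simp)
  finally show ?thesis .
qed

theorem lemma4p3:
  fixes \<Omega> :: "complex set" and N :: "real \<Rightarrow> nat"
  assumes "open \<Omega>" and "bounded \<Omega>" and "lipschitz_boundary \<Omega>"
  shows "\<forall>A. open A \<and> compact (closure A) \<and> closure A \<subseteq> \<Omega> \<longrightarrow>
           (\<exists>\<epsilon>0>0. \<forall>\<epsilon>. 0 < \<epsilon> \<and> \<epsilon> < \<epsilon>0 \<longrightarrow>
              (\<forall>u\<in>PC \<epsilon> (Sset (N \<epsilon>)). \<forall>\<mu> \<xi>. is_polar \<Omega> (Gcur \<epsilon> \<Omega> u) \<mu> \<xi> \<longrightarrow>
                 (\<integral>\<^sup>+ p\<in>A \<times> UNIV. ennreal (Phi (\<xi> p)) \<partial>\<mu>) \<le> ennreal (energy \<epsilon> \<Omega> u)))"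
proof (intro allI impI)
  fix A assume A: "open A \<and> compact (closure A) \<and> closure A \<subseteq> \<Omega>"
  then have A1: "open A" "compact (closure A)" "closure A \<subseteq> \<Omega>" by auto
  obtain d where d: "d > 0" "(\<Union>x\<in>closure A. ball x d) \<subseteq> \<Omega>"
    using compact_subset_open_imp_ball_epsilon_subset[OF A1(2) assms(1) A1(3)] by blast
  have dball: "ball x d \<subseteq> \<Omega>" if "x \<in> A" for x using d(2) that closure_subset by blast
  show "\<exists>\<epsilon>0>0. \<forall>\<epsilon>. 0 < \<epsilon> \<and> \<epsilon> < \<epsilon>0 \<longrightarrow>
              (\<forall>u\<in>PC \<epsilon> (Sset (N \<epsilon>)). \<forall>\<mu> \<xi>. is_polar \<Omega> (Gcur \<epsilon> \<Omega> u) \<mu> \<xi> \<longrightarrow>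
                 (\<integral>\<^sup>+ p\<in>A \<times> UNIV. ennreal (Phi (\<xi> p)) \<partial>\<mu>) \<le> ennreal (energy \<epsilon> \<Omega> u))"
  proof (intro exI[of _ "d/2"] conjI allI impI ballI)
    show "0 < d / 2" using d by simp
    fix \<epsilon> u \<mu> \<xi>
    assume \<epsilon>: "0 < \<epsilon> \<and> \<epsilon> < d / 2" and u: "u \<in> PC \<epsilon> (Sset (N \<epsilon>))"
      and pol: "is_polar \<Omega> (Gcur \<epsilon> \<Omega> u) \<mu> \<xi>"
    show "(\<integral>\<^sup>+ p\<in>A \<times> UNIV. ennreal (Phi (\<xi> p)) \<partial>\<mu>) \<le> ennreal (energy \<epsilon> \<Omega> u)"
      by (rule main_bound[OF pol _ assms(2) u A1 dball]) (use \<epsilon> in auto)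
  qed
qed


end
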